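(* Let $\mathrm P$ be a polymatroid on $E$ of type $\mathbf a$. Then the support of the augmented Bergman fan $\Sigma_{\mathrm P}$ (a subfan of $\Sigma_{\mathbf a}$) equals the support of the augmented Bergman fan $\Sigma_{\mathrm M_\pi(\mathrm P)}$ of the multisymmetric lift (a subfan of the stellahedral fan $\Sigma_{\widetilde E}$); more precisely, $\Sigma_{\mathrm P}$ is the coarsening of $\Sigma_{\mathrm M_\pi(\mathrm P)}$ which is a subfan of $\Sigma_{\mathbf a}$.
   Context: $E=\{1,\dots,m\}$, $\mathbf a\in\mathbb Z_{\ge0}^m$, $n=\sum a_i$. Polymatroid $\mathrm P$ of type $\mathbf a$: submodular monotone $\operatorname{rk}_{\mathrm P}:2^E\to\mathbb Z_{\ge0}$ with $\operatorname{rk}_{\mathrm P}(\emptyset)=0$, $\operatorname{rk}_{\mathrm P}(\{i\})\le a_i$. Flats: $F$ with $\operatorname{rk}(F\cup e)>\operatorname{rk}(F)$ for $e\notin F$. $\widetilde E$ is an $n$-element set, $\pi:\widetilde E\to E$ with $|\pi^{-1}(i)|=a_i$; $\mathbf e_U=\sum_{j\in U}\mathbf e_j\in\mathbb R^{\widetilde E}$. For any map $\pi:\widetilde E\to E$, a compatible pair $I\le\mathcal F$ is $I\subseteq\widetilde E$ and a chain $\mathcal F=\{F_1\subsetneq\dots\subsetneq F_{k+1}=E\}$ ($k\ge0$) with $\pi^{-1}(A)\subseteq I\Rightarrow A\subseteq F_1$; the fan $\Sigma_\pi$ has cones $\sigma_{I\le\mathcal F}=\operatorname{cone}(-\mathbf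 e_{\widetilde E\setminus\pi^{-1}(F_1)},\dots,-\mathbf e_{\widetilde E\setminus\pi^{-1}(F_k)},\mathbf e_j:j\in I)$. $\Sigma_{\mathbf a}=\Sigma_\pi$; the stellahedral fan $\Sigma_{\widetilde E}$ is $\Sigma_{\mathrm{id}}$ for $\mathrm{id}:\widetilde E\to\widetilde E$. The augmented Bergman fan $\Sigma_{\mathrm P}$ is the subfan of $\Sigma_{\mathbf a}$ of cones $\sigma_{S\le\mathcal F}$ with $S\subseteq\widetilde E$, $F_1,\dots,F_k$ proper flats of $\mathrm P$, such that (1) $\operatorname{rk}_{\mathrm P}(\pi(T))\ge|T|$ for all $T\subseteq S$ and (2) $\operatorname{rk}_{\mathrm P}(F\cup\pi(T))>\operatorname{rk}_{\mathrm P}(F)+|T|$ for all $F\in\mathcal F$ and nonempty $T\subseteq S\setminus\pi^{-1}(F)$. The multisymmetric lift $\mathrm M_\pi(\mathrm P)$ is the matroid on $\widetilde E$ with rank function $\operatorname{rk}(U)=\min_{A\subseteq E}\{\operatorname{rk}_{\mathrm P}(A)+|U\setminus\pi^{-1}(A)|\}$. For a matroid $\mathrm M$ on $\widetilde E$, its augmented Bergman fan $\Sigma_{\mathrm M}$ is the subfan of $\Sigma_{\widetilde E}$ of cones $\sigma_{I\le\mathcal F}$ with $I$ independent in $\mathrm M$, $\mathcal F$ a chain of proper flats of $\mathrm M$ (plus the ground set) and $I\subseteq F_1$. *)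

theory Defs
  imports Complex_Main
begin

text \<open>Ground set E :: 'a set (finite), lifted ground set Et :: 'b set (finite),
  map p : Et -> E. The type a is a_i = card of the fibre of p over i.
  Vectors in R^Et are functions 'b => real (vanishing outside Et for our generators).\<close>

definition fibre_card :: "'b set \<Rightarrow> ('b \<Rightarrow> 'a) \<Rightarrow> 'a \<Rightarrow> nat" where
  "fibre_card Et p i = card {j \<in> Et. p j = i}"

definition polymatroid :: "'a set \<Rightarrow> 'b set \<Rightarrow> ('b \<Rightarrow> 'a) \<Rightarrow> ('a set \<Rightarrow> nat) \<Rightarrow> bool" where
  "polymatroid E Et p rk \<longleftrightarrow>
     rk {} = 0 \<and>
     (\<forall>A B. A \<subseteq> B \<and> B \<subseteq> E \<longrightarrow> rk A \<le> rk B) \<and>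
     (\<forall>A B. A \<subseteq> E \<and> B \<subseteq> E \<longrightarrow> rk (A \<union> B) + rk (A \<inter> B) \<le> rk A + rk B) \<and>
     (\<forall>i \<in> E. rk {i} \<le> fibre_card Et p i)"

definition is_flat :: "'a set \<Rightarrow> ('a set \<Rightarrow> nat) \<Rightarrow> 'a set \<Rightarrow> bool" where
  "is_flat E rk F \<longleftrightarrow> F \<subseteq> E \<and> (\<forall>e \<in> E - F. rk (insert e F) > rk F)"

definition vec_ind :: "'b set \<Rightarrow> 'b \<Rightarrow> real" where
  "vec_ind U = (\<lambda>j. if j \<in> U then 1 else 0)"

definition cone_gen :: "('b \<Rightarrow> real) set \<Rightarrow> ('b \<Rightarrow> real) set" where
  "cone_gen G = {x. \<exists>c. (\<forall>g \<in> G. c g \<ge> 0) \<and> x = (\<lambda>j. \<Sum>g\<in>G. c g * g j)}"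

text \<open>A chain F_1 < ... < F_k < F_(k+1) = E is represented by the list Fs = [F_1,...,F_k];
  F_1 is hd (Fs @ [E]).\<close>
definition is_chain :: "'a set \<Rightarrow> 'a set list \<Rightarrow> bool" where
  "is_chain E Fs \<longleftrightarrow> sorted_wrt (\<subset>) (Fs @ [E])"

definition first_flat :: "'a set \<Rightarrow> 'a set list \<Rightarrow> 'a set" where
  "first_flat E Fs = hd (Fs @ [E])"

definition compatible :: "'a set \<Rightarrow> 'b set \<Rightarrow> ('b \<Rightarrow> 'a) \<Rightarrow> 'b set \<Rightarrow> 'a set list \<Rightarrow> bool" where
  "compatible E Et p I Fs \<longleftrightarrow> I \<subseteq> Et \<and> is_chain E Fs \<and>
     (\<forall>A. A \<subseteq> E \<and> {j \<in> Et. p j \<in> A} \<subseteq> I \<longrightarrow> A \<subseteq> first_flat E Fs)"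

definition sigma_cone :: "'b set \<Rightarrow> ('b \<Rightarrow> 'a) \<Rightarrow> 'b set \<Rightarrow> 'a set list \<Rightarrow> ('b \<Rightarrow> real) set" where
  "sigma_cone Et p I Fs =
     cone_gen ((\<lambda>F. (\<lambda>j. - vec_ind (Et - {j \<in> Et. p j \<in> F}) j)) ` set Fs
               \<union> (\<lambda>j. vec_ind {j}) ` I)"

definition fan_pi :: "'a set \<Rightarrow> 'b set \<Rightarrow> ('b \<Rightarrow> 'a) \<Rightarrow> ('b \<Rightarrow> real) set set" where
  "fan_pi E Et p = {sigma_cone Et p I Fs | I Fs. compatible E Et p I Fs}"

definition aug_bergman_poly ::
  "'a set \<Rightarrow> 'b set \<Rightarrow> ('b \<Rightarrow> 'a) \<Rightarrow> ('a set \<Rightarrow> nat) \<Rightarrow> ('b \<Rightarrow> real) set set" where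
  "aug_bergman_poly E Et p rk =
     {sigma_cone Et p S Fs | S Fs.
        compatible E Et p S Fs \<and>
        (\<forall>F \<in> set Fs. is_flat E rk F \<and> F \<noteq> E) \<and>
        (\<forall>T. T \<subseteq> S \<longrightarrow> rk (p ` T) \<ge> card T) \<and>
        (\<forall>F \<in> set (Fs @ [E]). \<forall>T. T \<subseteq> S - {j. p j \<in> F} \<and> T \<noteq> {} \<longrightarrow>
            rk (F \<union> p ` T) > rk F + card T)}"

definition lift_rank :: "'a set \<Rightarrow> ('b \<Rightarrow> 'a) \<Rightarrow> ('a set \<Rightarrow> nat) \<Rightarrow> 'b set \<Rightarrow> nat" where
  "lift_rank E p rk U = Min {rk A + card (U - {j. p j \<in> A}) | A. A \<subseteq> E}"

definition mat_indep :: "'b set \<Rightarrow> ('b set \<Rightarrow> nat) \<Rightarrow> 'b set \<Rightarrow> bool" where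
  "mat_indep Et r I \<longleftrightarrow> I \<subseteq> Et \<and> r I = card I"

definition aug_bergman_mat :: "'b set \<Rightarrow> ('b set \<Rightarrow> nat) \<Rightarrow> ('b \<Rightarrow> real) set set" where
  "aug_bergman_mat Et r =
     {sigma_cone Et id I Fs | I Fs.
        compatible Et Et id I Fs \<and>
        (\<forall>F \<in> set Fs. is_flat Et r F \<and> F \<noteq> Et) \<and>
        mat_indep Et r I \<and> I \<subseteq> first_flat Et Fs}"

definition support :: "('b \<Rightarrow> real) set set \<Rightarrow> ('b \<Rightarrow> real) set" where
  "support S = \<Union> S"

end

theory Submission
  imports Defs
begin

definition ng :: "'b set \<Rightarrow> 'b \<Rightarrow> real" where "ng X = (\<lambda>j. - vec_ind X j)"

lemma sigma_cone_alt:
  "sigma_cone Et p I Fs = cone_gen ((\<lambda>F. ng (Et - {j \<in> Et. p j \<in> F})) ` set Fs \<union> (\<lambda>j. vec_ind {j}) ` I)"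
  by (simp add: sigma_cone_def ng_def)

lemma cone_zero: "(\<lambda>j. 0) \<in> cone_gen G"
  unfolding cone_gen_def by (rule CollectI, rule exI[of _ "\<lambda>_. 0"]) simp

lemma cone_add: assumes "x \<in> cone_gen G" "y \<in> cone_gen G" shows "(\<lambda>j. x j + y j) \<in> cone_gen G"
proof -
  obtain c where c: "\<forall>g\<in>G. c g \<ge> 0" "x = (\<lambda>j. \<Sum>g\<in>G. c g * g j)" using assms(1) unfolding cone_gen_def by blast
  obtain d where d: "\<forall>g\<in>G. d g \<ge> 0" "y = (\<lambda>j. \<Sum>g\<in>G. d g * g j)" using assms(2) unfolding cone_gen_def by blast
  show ?thesis unfolding cone_gen_def
    by (rule CollectI, rule exI[of _ "\<lambda>g. c g + d g"]) (simp add: c d sum.distrib distrib_right add_nonneg_nonneg)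
qed

lemma cone_scale: assumes "x \<in> cone_gen G" "(a::real) \<ge> 0" shows "(\<lambda>j. a * x j) \<in> cone_gen G"
proof -
  obtain c where c: "\<forall>g\<in>G. c g \<ge> 0" "x = (\<lambda>j. \<Sum>g\<in>G. c g * g j)" using assms(1) unfolding cone_gen_def by blast
  show ?thesis unfolding cone_gen_def
    by (rule CollectI, rule exI[of _ "\<lambda>g. a * c g"]) (simp add: c assms(2) sum_distrib_left mult.assoc)
qed

lemma cone_sum: assumes "finite A" "\<forall>a\<in>A. f a \<in> cone_gen G" shows "(\<lambda>j. \<Sum>a\<in>A. f a j) \<in> cone_gen G"
  using assms
proof (induction A rule: finite_induct)
  case empty then show ?case using cone_zero by simp
next
  case (insert a A)
  then show ?case using cone_add[of "f a" G "\<lambda>j. \<Sum>a\<in>A. f a j"] by simp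
qed

lemma cone_mem: assumes "finite G" "g \<in> G" shows "g \<in> cone_gen G"
proof -
  have "g = (\<lambda>j. \<Sum>h\<in>G. (if h = g then 1 else 0) * h j)"
  proof
    fix j
    have "(\<Sum>h\<in>G. (if h = g then 1 else 0) * h j) = (\<Sum>h\<in>G. (if h = g then g j else 0))"
      by (rule sum.cong) auto
    then show "g j = (\<Sum>h\<in>G. (if h = g then 1 else 0) * h j)" using assms by simp
  qed
  then show ?thesis unfolding cone_gen_def
    by (intro CollectI exI[of _ "\<lambda>h. if h = g then 1 else 0"]) simp
qed

lemma cone_subset: assumes "finite G" "G \<subseteq> cone_gen H" shows "cone_gen G \<subseteq> cone_gen H"
proof
  fix x assume "x \<in> cone_gen G"
  then obtain c where c: "\<forall>g\<in>G. c g \<ge> 0" "x = (\<lambda>j. \<Sum>g\<in>G. c g * g j)" unfolding cone_gen_def by blast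
  have "\<forall>g\<in>G. (\<lambda>j. c g * g j) \<in> cone_gen H" using assms(2) c(1) cone_scale by blast
  then show "x \<in> cone_gen H" using cone_sum[OF assms(1), of "\<lambda>g j. c g * g j"] c(2) by simp
qed

lemma cone_mono: assumes "finite H" "G \<subseteq> H" shows "cone_gen G \<subseteq> cone_gen H"
  using assms cone_subset[of G H] cone_mem[of H] finite_subset by blast

lemma cone_vanish: assumes "x \<in> cone_gen G" "\<forall>g\<in>G. g j = 0" shows "x j = 0"
proof -
  obtain c where c: "x = (\<lambda>j. \<Sum>g\<in>G. c g * g j)" using assms(1) unfolding cone_gen_def by blast
  show ?thesis unfolding c using assms(2) by (simp add: sum.neutral)
qed

lemma vec_ind_cone: assumes "finite J" "\<forall>j\<in>J. vec_ind {j} \<in> cone_gen G" shows "vec_ind J \<in> cone_gen G"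
proof -
  have "vec_ind J = (\<lambda>i. \<Sum>j\<in>J. vec_ind {j} i)"
    using assms(1) by (auto simp: vec_ind_def)
  then show ?thesis using cone_sum[OF assms(1), of "\<lambda>j. vec_ind {j}"] assms(2) by simp
qed

lemma sorted_wrt_total: "sorted_wrt R xs \<Longrightarrow> a \<in> set xs \<Longrightarrow> b \<in> set xs \<Longrightarrow> a = b \<or> R a b \<or> R b a"
proof (induction xs)
  case Nil then show ?case by simp
next
  case (Cons x xs)
  then have h: "\<forall>y\<in>set xs. R x y" "sorted_wrt R xs" by simp_all
  show ?case
  proof (cases "a = x")
    case True then show ?thesis
      using Cons.prems(3) h(1) by (cases "b = x") auto
  next
    case False
    then have a: "a \<in> set xs" using Cons.prems(2) by simp
    show ?thesis
    proof (cases "b = x")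
      case True then show ?thesis using a h(1) by blast
    next
      case False
      then have "b \<in> set xs" using Cons.prems(3) by simp
      then show ?thesis using Cons.IH[OF h(2) a] by blast
    qed
  qed
qed

lemma chain_max: assumes "finite X" "X \<noteq> {}" "\<forall>A\<in>X. \<forall>B\<in>X. A \<subseteq> B \<or> B \<subseteq> A"
  shows "\<exists>M\<in>X. \<forall>A\<in>X. A \<subseteq> M"
  using assms
proof (induction X rule: finite_ne_induct)
  case (singleton x) then show ?case by simp
next
  case (insert x F)
  have c: "\<forall>A\<in>F. \<forall>B\<in>F. A \<subseteq> B \<or> B \<subseteq> A" using insert.prems by simp
  obtain M where M: "M \<in> F" "\<forall>A\<in>F. A \<subseteq> M" using insert.IH[OF c] by (elim bexE)
  have "x \<subseteq> M \<or> M \<subseteq> x" using insert.prems(1) M(1) by blast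
  then show ?case
  proof
    assume "x \<subseteq> M" then show ?thesis using M by (intro bexI[of _ M]) auto
  next
    assume "M \<subseteq> x" then show ?thesis using M by (intro bexI[of _ x]) auto
  qed
qed

lemma chain_min: assumes "finite X" "X \<noteq> {}" "\<forall>A\<in>X. \<forall>B\<in>X. A \<subseteq> B \<or> B \<subseteq> A"
  shows "\<exists>M\<in>X. \<forall>A\<in>X. M \<subseteq> A"
  using assms
proof (induction X rule: finite_ne_induct)
  case (singleton x) then show ?case by simp
next
  case (insert x F)
  have c: "\<forall>A\<in>F. \<forall>B\<in>F. A \<subseteq> B \<or> B \<subseteq> A" using insert.prems by simp
  obtain M where M: "M \<in> F" "\<forall>A\<in>F. M \<subseteq> A" using insert.IH[OF c] by (elim bexE)
  have "x \<subseteq> M \<or> M \<subseteq> x" using insert.prems(1) M(1) by blast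
  then show ?case
  proof
    assume "x \<subseteq> M" then show ?thesis using M by (intro bexI[of _ x]) auto
  next
    assume "M \<subseteq> x" then show ?thesis using M by (intro bexI[of _ M]) auto
  qed
qed

lemma chain_list: assumes "finite X" "\<forall>A\<in>X. \<forall>B\<in>X. A \<subseteq> B \<or> B \<subseteq> A" "\<forall>A\<in>X. A \<subset> tp"
  shows "\<exists>Fs. set Fs = X \<and> sorted_wrt (\<subset>) (Fs @ [tp])"
  using assms
proof (induction "card X" arbitrary: X tp)
  case 0
  then have "X = {}" by simp
  then show ?case by (intro exI[of _ "[]"]) simp
next
  case (Suc n)
  then have "X \<noteq> {}" by auto
  then obtain M where M: "M \<in> X" "\<forall>A\<in>X. A \<subseteq> M" using chain_max[OF Suc.prems(1) _ Suc.prems(2)] by blast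
  have c3: "\<forall>A\<in>X - {M}. A \<subset> M" using M by blast
  have c0: "n = card (X - {M})" using Suc.hyps(2) M(1) Suc.prems(1) by simp
  have c1: "finite (X - {M})" using Suc.prems(1) by simp
  have c2: "\<forall>A\<in>X - {M}. \<forall>B\<in>X - {M}. A \<subseteq> B \<or> B \<subseteq> A" using Suc.prems(2) by blast
  obtain Fs where Fs: "set Fs = X - {M}" "sorted_wrt (\<subset>) (Fs @ [M])"
    using Suc.hyps(1)[OF c0 c1 c2 c3] by blast
  have s: "set (Fs @ [M]) = X" using Fs M by auto
  have "sorted_wrt (\<subset>) ((Fs @ [M]) @ [tp])"
    unfolding sorted_wrt_append[of _ "Fs @ [M]"] using Fs(2) Suc.prems(3) s by simp
  with s show ?case by (intro exI[of _ "Fs @ [M]"]) simp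
qed

lemma sorted_hd_le: "hd (Fs @ [tp]) \<subseteq> A" if "sorted_wrt (\<subset>) (Fs @ [tp])" "A \<in> set (Fs @ [tp])"
proof (cases Fs)
  case Nil then show ?thesis using that by simp
next
  case (Cons F Fs')
  then have "\<forall>y\<in>set (Fs' @ [tp]). F \<subset> y" using that(1) by simp
  then show ?thesis using that(2) Cons by auto
qed

locale setting =
  fixes E :: "'a set" and Et :: "'b set" and p :: "'b \<Rightarrow> 'a" and rk :: "'a set \<Rightarrow> nat"
  assumes finE: "finite E" and finEt: "finite Et" and pEt: "p ` Et \<subseteq> E"
    and poly: "polymatroid E Et p rk"
begin

abbreviation pre :: "'a set \<Rightarrow> 'b set" where "pre A \<equiv> {j \<in> Et. p j \<in> A}"
abbreviation r :: "'b set \<Rightarrow> nat" where "r \<equiv> lift_rank E p rk"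

lemma rk_empty: "rk {} = 0" using poly unfolding polymatroid_def by blast
lemma rk_mono: "A \<subseteq> B \<Longrightarrow> B \<subseteq> E \<Longrightarrow> rk A \<le> rk B" using poly unfolding polymatroid_def by blast
lemma rk_submod: "A \<subseteq> E \<Longrightarrow> B \<subseteq> E \<Longrightarrow> rk (A \<union> B) + rk (A \<inter> B) \<le> rk A + rk B"
  using poly unfolding polymatroid_def by blast
lemma rk_single: "i \<in> E \<Longrightarrow> rk {i} \<le> card {j \<in> Et. p j = i}"
  using poly unfolding polymatroid_def fibre_card_def by blast

lemma pT_sub: "T \<subseteq> Et \<Longrightarrow> p ` T \<subseteq> E" using pEt by blast

lemma rk_union_le: assumes "finite B" "B \<subseteq> E" "A \<subseteq> E"
  shows "rk (A \<union> B) \<le> rk A + card (pre B)"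
  using assms
proof (induction B rule: finite_induct)
  case empty then show ?case by simp
next
  case (insert e B)
  have e: "e \<in> E" and B: "B \<subseteq> E" using insert.prems by auto
  have "rk ((A \<union> B) \<union> {e}) + rk ((A \<union> B) \<inter> {e}) \<le> rk (A \<union> B) + rk {e}"
    using rk_submod[of "A \<union> B" "{e}"] e B insert.prems(2) by blast
  then have 1: "rk (A \<union> insert e B) \<le> rk (A \<union> B) + rk {e}" by simp
  have 2: "rk {e} \<le> card {j \<in> Et. p j = e}" using rk_single e by blast
  have "pre (insert e B) = pre B \<union> {j \<in> Et. p j = e}" by auto
  moreover have "pre B \<inter> {j \<in> Et. p j = e} = {}" using insert.hyps(2) by auto
  ultimately have 3: "card (pre (insert e B)) = card (pre B) + card {j \<in> Et. p j = e}"
    using finEt by (simp add: card_Un_disjoint)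
  show ?case using 1 2 3 insert.IH[OF B insert.prems(2)] by linarith
qed

lemma rk_K: assumes "A \<subseteq> E" "F \<subseteq> E"
  shows "rk (A \<union> F) \<le> rk A + card (pre F - {j. p j \<in> A})"
proof -
  have "A \<union> (F - A) = A \<union> F" by blast
  moreover have "pre (F - A) = pre F - {j. p j \<in> A}" by blast
  moreover have "finite (F - A)" using finE assms(2) finite_subset by blast
  ultimately show ?thesis using rk_union_le[of "F - A" A] assms by auto
qed

lemma r_set_eq: "{rk A + card (U - {j. p j \<in> A}) | A. A \<subseteq> E} = (\<lambda>A. rk A + card (U - {j. p j \<in> A})) ` Pow E"
  by auto

lemma r_le: "A \<subseteq> E \<Longrightarrow> r U \<le> rk A + card (U - {j. p j \<in> A})"
  unfolding lift_rank_def r_set_eq using finE by (intro Min_le) auto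

lemma r_obtain: "\<exists>A \<subseteq> E. r U = rk A + card (U - {j. p j \<in> A})"
proof -
  have "r U \<in> (\<lambda>A. rk A + card (U - {j. p j \<in> A})) ` Pow E"
    unfolding lift_rank_def r_set_eq using finE by (intro Min_in) auto
  then show ?thesis by auto
qed

lemma r_ge: "(\<And>A. A \<subseteq> E \<Longrightarrow> n \<le> rk A + card (U - {j. p j \<in> A})) \<Longrightarrow> n \<le> r U"
  using r_obtain[of U] by force

lemma LBd: assumes F: "F \<subseteq> E" and K: "K \<subseteq> Et" "K \<inter> pre F = {}"
  and weak: "\<forall>T. T \<subseteq> K \<longrightarrow> rk F + card T \<le> rk (F \<union> p ` T)"
  shows "rk F + card K \<le> r (pre F \<union> K)"
proof (rule r_ge)
  fix A assume A: "A \<subseteq> E"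
  let ?PA = "{j. p j \<in> A}"
  have fK: "finite K" using K finEt finite_subset by blast
  have "(pre F \<union> K) - ?PA = (pre F - ?PA) \<union> (K - ?PA)" by blast
  moreover have "(pre F - ?PA) \<inter> (K - ?PA) = {}" using K by blast
  ultimately have c1: "card ((pre F \<union> K) - ?PA) = card (pre F - ?PA) + card (K - ?PA)"
    using finEt fK by (simp add: card_Un_disjoint)
  have c2: "rk (A \<union> F) \<le> rk A + card (pre F - ?PA)" using rk_K A F by blast
  let ?T = "K \<inter> ?PA"
  have "F \<union> p ` ?T \<subseteq> A \<union> F" by blast
  moreover have "A \<union> F \<subseteq> E" using A F by blast
  ultimately have c3: "rk (F \<union> p ` ?T) \<le> rk (A \<union> F)" using rk_mono by blast
  have c4: "rk F + card ?T \<le> rk (F \<union> p ` ?T)" using weak by blast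
  have c5: "card K = card ?T + card (K - ?PA)"
    using fK by (metis Diff_Diff_Int Int_commute card_Diff_subset_Int card_Int_Diff finite_Int inf_le1)
  show "rk F + card K \<le> rk A + card ((pre F \<union> K) - ?PA)" using c1 c2 c3 c4 c5 by linarith
qed

lemma LR_upper: assumes "F \<subseteq> E" "K \<inter> pre F = {}" "K \<subseteq> Et"
  shows "r (pre F \<union> K) \<le> rk F + card K"
proof -
  have "(pre F \<union> K) - {j. p j \<in> F} = K" using assms by blast
  then show ?thesis using r_le[OF assms(1), of "pre F \<union> K"] by simp
qed

lemma indep_D: assumes "mat_indep Et r I" "T \<subseteq> I" shows "card T \<le> rk (p ` T)"
proof -
  have I: "I \<subseteq> Et" "r I = card I" using assms(1) unfolding mat_indep_def by auto
  have fI: "finite I" using I finEt finite_subset by blast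
  have "p ` T \<subseteq> E" using I assms(2) pEt by blast
  then have "r I \<le> rk (p ` T) + card (I - {j. p j \<in> p ` T})" by (rule r_le)
  moreover have "I - {j. p j \<in> p ` T} \<subseteq> I - T" by blast
  then have "card (I - {j. p j \<in> p ` T}) \<le> card (I - T)" using fI by (intro card_mono) auto
  moreover have "card (I - T) = card I - card T" using assms(2) fI by (simp add: card_Diff_subset finite_subset)
  moreover have "card T \<le> card I" using assms(2) fI by (simp add: card_mono)
  ultimately show ?thesis using I by linarith
qed

lemma indep_I: assumes "I \<subseteq> Et" "\<forall>T. T \<subseteq> I \<longrightarrow> card T \<le> rk (p ` T)" shows "mat_indep Et r I"
proof -
  have "r I \<le> rk {} + card (I - {j. p j \<in> {}})" by (rule r_le) simp
  then have 1: "r I \<le> card I" using rk_empty by simp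
  have "rk {} + card I \<le> r (pre {} \<union> I)"
    by (rule LBd) (use assms rk_empty in auto)
  then have "card I \<le> r I" using rk_empty by simp
  then show ?thesis using 1 assms(1) unfolding mat_indep_def by simp
qed

end

context setting begin

definition cond2 :: "'a set \<Rightarrow> 'b set \<Rightarrow> bool" where
  "cond2 F K \<longleftrightarrow> (\<forall>T. T \<subseteq> K \<and> T \<noteq> {} \<longrightarrow> rk F + card T < rk (F \<union> p ` T))"

definition aform :: "'a set \<Rightarrow> 'b set \<Rightarrow> bool" where
  "aform F K \<longleftrightarrow> (\<forall>A. F \<subseteq> A \<and> A \<subseteq> E \<and> K \<inter> {j. p j \<in> A} \<noteq> {} \<longrightarrow> rk F + card (K \<inter> {j. p j \<in> A}) < rk A)"

definition Fof :: "'b set \<Rightarrow> 'a set" where "Fof G = {e \<in> E. \<forall>j\<in>Et. p j = e \<longrightarrow> j \<in> G}"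
definition Jof :: "'b set \<Rightarrow> 'b set" where "Jof G = G - pre (Fof G)"

lemma loop_in_flat: assumes "is_flat E rk F" "e \<in> E" "rk {e} = 0" shows "e \<in> F"
proof (rule ccontr)
  assume "e \<notin> F"
  have FE: "F \<subseteq> E" using assms(1) unfolding is_flat_def by blast
  have "rk (F \<union> {e}) + rk (F \<inter> {e}) \<le> rk F + rk {e}" using rk_submod FE assms(2) by blast
  then have "rk (insert e F) \<le> rk F" using assms(3) by simp
  moreover have "rk (insert e F) > rk F" using assms(1) \<open>e \<notin> F\<close> assms(2) unfolding is_flat_def by blast
  ultimately show False by simp
qed

lemma empty_fibre_loop: assumes "e \<in> E" "\<forall>j\<in>Et. p j \<noteq> e" shows "rk {e} = 0"
proof -
  have "{j \<in> Et. p j = e} = {}" using assms by blast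
  then have "card {j \<in> Et. p j = e} = 0" by (simp only: card.empty)
  then show ?thesis using rk_single[OF assms(1)] by linarith
qed

lemma flat_lift: assumes F: "is_flat E rk F" and c: "cond2 F K" and K: "K \<subseteq> Et" "K \<inter> pre F = {}"
  shows "is_flat Et r (pre F \<union> K)"
  unfolding is_flat_def
proof (intro conjI ballI)
  show "pre F \<union> K \<subseteq> Et" using K by blast
  fix y assume y: "y \<in> Et - (pre F \<union> K)"
  have FE: "F \<subseteq> E" using F unfolding is_flat_def by blast
  have fK: "finite K" using K finEt finite_subset by blast
  have up: "r (pre F \<union> K) \<le> rk F + card K" using LR_upper FE K by blast
  have weak: "\<forall>T. T \<subseteq> insert y K \<longrightarrow> rk F + card T \<le> rk (F \<union> p ` T)"
  proof (intro allI impI)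
    fix T assume T: "T \<subseteq> insert y K"
    have pT: "F \<union> p ` T \<subseteq> E" using T K y FE pEt by blast
    show "rk F + card T \<le> rk (F \<union> p ` T)"
    proof (cases "y \<in> T")
      case False
      then have TK: "T \<subseteq> K" using T by blast
      show ?thesis
      proof (cases "T = {}")
        case True then show ?thesis by simp
      next
        case False
        then have "rk F + card T < rk (F \<union> p ` T)" using c TK unfolding cond2_def by blast
        then show ?thesis by simp
      qed
    next
      case True
      let ?T0 = "T - {y}"
      have T0K: "?T0 \<subseteq> K" using T by blast
      have fT0: "finite ?T0" using fK T0K finite_subset by blast
      have "T = insert y ?T0" using True by blast
      then have cT: "card T = card ?T0 + 1" using fT0 by (metis card_insert_disjoint Diff_iff singletonI Suc_eq_plus1)
      show ?thesis
      proof (cases "?T0 = {}")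
        case True
        then have "T = {y}" using \<open>y \<in> T\<close> by blast
        moreover have "p y \<in> E - F" using y pEt by blast
        then have "rk (insert (p y) F) > rk F" using F unfolding is_flat_def by blast
        ultimately show ?thesis by simp
      next
        case False
        then have "rk F + card ?T0 < rk (F \<union> p ` ?T0)" using c T0K unfolding cond2_def by blast
        moreover have "rk (F \<union> p ` ?T0) \<le> rk (F \<union> p ` T)" using pT by (intro rk_mono) auto
        ultimately show ?thesis using cT by linarith
      qed
    qed
  qed
  have "rk F + card (insert y K) \<le> r (pre F \<union> insert y K)"
  proof (rule LBd[OF FE])
    show "insert y K \<subseteq> Et" using K y by blast
    show "insert y K \<inter> pre F = {}" using K y by blast
  qed (rule weak)
  moreover have "card (insert y K) = card K + 1" using y fK by simp
  moreover have "pre F \<union> insert y K = insert y (pre F \<union> K)" by blast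
  ultimately show "r (pre F \<union> K) < r (insert y (pre F \<union> K))" using up by simp
qed

lemma Fof_sub: "Fof G \<subseteq> E" unfolding Fof_def by blast
lemma pre_Fof: "pre (Fof G) \<subseteq> G" unfolding Fof_def using pEt by blast
lemma Fof_mono: "G \<subseteq> G' \<Longrightarrow> Fof G \<subseteq> Fof G'" unfolding Fof_def by blast
lemma Jof_sub: "Jof G \<subseteq> G" unfolding Jof_def by blast
lemma Jof_disj: "Jof G \<inter> pre (Fof G) = {}" unfolding Jof_def by blast
lemma G_decomp: "G = pre (Fof G) \<union> Jof G" using pre_Fof unfolding Jof_def by blast

lemma flat_G_rank: assumes G: "is_flat Et r G" shows "rk (Fof G) + card (Jof G) \<le> r G"
proof -
  obtain A where A: "A \<subseteq> E" "r G = rk A + card (G - {j. p j \<in> A})" using r_obtain by blast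
  have GEt: "G \<subseteq> Et" using G unfolding is_flat_def by blast
  have fG: "finite G" using GEt finEt finite_subset by blast
  have sub: "pre A \<subseteq> G"
  proof
    fix y assume y: "y \<in> pre A"
    show "y \<in> G"
    proof (rule ccontr)
      assume "y \<notin> G"
      then have "r (insert y G) > r G" using G y unfolding is_flat_def by blast
      moreover have "r (insert y G) \<le> rk A + card (insert y G - {j. p j \<in> A})" using r_le A(1) by blast
      moreover have "insert y G - {j. p j \<in> A} = G - {j. p j \<in> A}" using y by blast
      ultimately show False using A(2) by simp
    qed
  qed
  have AF: "A \<subseteq> Fof G"
  proof
    fix e assume e: "e \<in> A"
    have "\<forall>j\<in>Et. p j = e \<longrightarrow> j \<in> G" using sub e by blast
    then show "e \<in> Fof G" unfolding Fof_def using e A(1) by blast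
  qed
  define F where "F = Fof G"
  define PA where "PA = {j. p j \<in> A}"
  have pF: "pre F \<subseteq> G" unfolding F_def by (rule pre_Fof)
  have J: "Jof G = G - pre F" unfolding Jof_def F_def by simp
  have GPA: "G \<inter> PA \<subseteq> pre F" using AF GEt unfolding F_def PA_def by blast
  have "G - PA = (pre F - PA) \<union> Jof G" unfolding J using pF GPA by blast
  moreover have "(pre F - PA) \<inter> Jof G = {}" unfolding J by blast
  moreover have fin1: "finite (pre F - PA)" using finEt by simp
  moreover have fin2: "finite (Jof G)" using J fG by simp
  ultimately have "card (G - PA) = card (pre F - PA) + card (Jof G)"
    by (simp add: card_Un_disjoint)
  moreover have "rk (A \<union> F) \<le> rk A + card (pre F - PA)" unfolding F_def PA_def using rk_K A(1) Fof_sub by blast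
  moreover have "A \<union> F = F" using AF unfolding F_def by blast
  ultimately show ?thesis using A(2) unfolding F_def PA_def by simp
qed

lemma flat_G: assumes G: "is_flat Et r G" "G \<noteq> Et"
  shows "is_flat E rk (Fof G) \<and> Fof G \<noteq> E \<and> cond2 (Fof G) (Jof G)"
proof (intro conjI)
  let ?F = "Fof G" and ?J = "Jof G"
  have GEt: "G \<subseteq> Et" using G unfolding is_flat_def by blast
  have fG: "finite G" using GEt finEt finite_subset by blast
  have rG: "rk ?F + card ?J \<le> r G" using flat_G_rank G by blast
  have ex_y: "\<exists>y\<in>Et. p y = e \<and> y \<notin> G" if "e \<in> E" "e \<notin> ?F" for e
    using that unfolding Fof_def by blast
  show "is_flat E rk ?F" unfolding is_flat_def
  proof (intro conjI ballI)
    show "?F \<subseteq> E" by (rule Fof_sub)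
    fix e assume e: "e \<in> E - ?F"
    obtain y where y: "y \<in> Et" "p y = e" "y \<notin> G" using ex_y e by blast
    show "rk ?F < rk (insert e ?F)"
    proof (rule ccontr)
      assume "\<not> rk ?F < rk (insert e ?F)"
      then have le: "rk (insert e ?F) \<le> rk ?F" by simp
      have "r (insert y G) \<le> rk (insert e ?F) + card (insert y G - {j. p j \<in> insert e ?F})"
        using r_le e Fof_sub by blast
      moreover have "insert y G - {j. p j \<in> insert e ?F} \<subseteq> ?J" using y(2) unfolding Jof_def by blast
      then have "card (insert y G - {j. p j \<in> insert e ?F}) \<le> card ?J"
        using fG by (intro card_mono) (auto simp: Jof_def)
      moreover have "r (insert y G) > r G" using G y unfolding is_flat_def by blast
      ultimately show False using le rG by linarith
    qed
  qed
  show "?F \<noteq> E"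
  proof
    assume "?F = E"
    then have "Et \<subseteq> G" unfolding Fof_def using pEt by blast
    then show False using G GEt by blast
  qed
  show "cond2 ?F ?J" unfolding cond2_def
  proof (intro allI impI)
    fix T assume T: "T \<subseteq> ?J \<and> T \<noteq> {}"
    obtain t where t: "t \<in> T" using T by blast
    have tE: "p t \<in> E" "p t \<notin> ?F" "t \<in> Et" using t T GEt pEt unfolding Jof_def by blast+
    obtain y where y: "y \<in> Et" "p y = p t" "y \<notin> G" using ex_y tE by blast
    show "rk ?F + card T < rk (?F \<union> p ` T)"
    proof (rule ccontr)
      assume "\<not> ?thesis"
      then have le: "rk (?F \<union> p ` T) \<le> rk ?F + card T" by simp
      have AE: "?F \<union> p ` T \<subseteq> E" using Fof_sub T GEt pEt unfolding Jof_def by blast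
      have "r (insert y G) \<le> rk (?F \<union> p ` T) + card (insert y G - {j. p j \<in> ?F \<union> p ` T})"
        using r_le AE by blast
      moreover have "insert y G - {j. p j \<in> ?F \<union> p ` T} \<subseteq> ?J - T"
        using y(2) t unfolding Jof_def by auto
      then have "card (insert y G - {j. p j \<in> ?F \<union> p ` T}) \<le> card (?J - T)"
        using fG by (intro card_mono) (auto simp: Jof_def)
      moreover have "card (?J - T) = card ?J - card T" using T fG
        by (meson card_Diff_subset finite_subset Jof_sub)
      moreover have "card T \<le> card ?J" using T fG by (meson card_mono finite_subset Jof_sub)
      moreover have "r (insert y G) > r G" using G y unfolding is_flat_def by blast
      ultimately show False using le rG by linarith
    qed
  qed
qed

lemma cond2_aform: assumes "K \<subseteq> Et" "cond2 F K" "F \<subseteq> E" shows "aform F K"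
  unfolding aform_def
proof (intro allI impI)
  fix A assume A: "F \<subseteq> A \<and> A \<subseteq> E \<and> K \<inter> {j. p j \<in> A} \<noteq> {}"
  let ?T = "K \<inter> {j. p j \<in> A}"
  have "?T \<subseteq> K \<and> ?T \<noteq> {}" using A by blast
  then have "rk F + card ?T < rk (F \<union> p ` ?T)" using assms(2)[unfolded cond2_def, rule_format, of ?T] by blast
  moreover have "F \<union> p ` ?T \<subseteq> A" using A by blast
  then have "rk (F \<union> p ` ?T) \<le> rk A" using A by (intro rk_mono) auto
  ultimately show "rk F + card ?T < rk A" by simp
qed

lemma aform_cond2: assumes "K \<subseteq> Et" "aform F K" "F \<subseteq> E" shows "cond2 F K"
  unfolding cond2_def
proof (intro allI impI)
  fix T assume T: "T \<subseteq> K \<and> T \<noteq> {}"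
  let ?A = "F \<union> p ` T"
  have AE: "?A \<subseteq> E" using T assms pEt by blast
  have sub: "T \<subseteq> K \<inter> {j. p j \<in> ?A}" using T by blast
  then have "K \<inter> {j. p j \<in> ?A} \<noteq> {}" using T by blast
  then have "rk F + card (K \<inter> {j. p j \<in> ?A}) < rk ?A" using assms(2)[unfolded aform_def, rule_format, of ?A] AE by blast
  moreover have "card T \<le> card (K \<inter> {j. p j \<in> ?A})"
    using sub assms(1) finEt by (meson card_mono finite_Int finite_subset)
  ultimately show "rk F + card T < rk ?A" by simp
qed

lemma aform_weak: assumes "aform F K" "F \<subseteq> A" "A \<subseteq> E"
  shows "rk F + card (K \<inter> {j. p j \<in> A}) \<le> rk A"
proof (cases "K \<inter> {j. p j \<in> A} = {}")
  case True then show ?thesis using rk_mono assms by simp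
next
  case False then show ?thesis using assms(1)[unfolded aform_def, rule_format, of A] assms(2,3) by simp
qed

lemma aform_mono: "aform F K \<Longrightarrow> K' \<subseteq> K \<Longrightarrow> K \<subseteq> Et \<Longrightarrow> F \<subseteq> E \<Longrightarrow> aform F K'"
proof -
  assume a: "aform F K" "K' \<subseteq> K" "K \<subseteq> Et" "F \<subseteq> E"
  have "cond2 F K" using aform_cond2 a by blast
  then have "cond2 F K'" using a(2) unfolding cond2_def by blast
  then show "aform F K'" using cond2_aform a by blast
qed

lemma aform_chain: assumes FF: "F \<subseteq> F'" "F' \<subseteq> E" and a1: "aform F J" and a2: "aform F' K'"
  and Ksub: "K \<subseteq> (J \<inter> {j. p j \<in> F'}) \<union> K'" and fin: "J \<subseteq> Et" "K' \<subseteq> Et"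
  shows "aform F K"
  unfolding aform_def
proof (intro allI impI)
  fix A assume A: "F \<subseteq> A \<and> A \<subseteq> E \<and> K \<inter> {j. p j \<in> A} \<noteq> {}"
  let ?B = "A \<inter> F'" and ?A' = "A \<union> F'"
  let ?X = "J \<inter> {j. p j \<in> ?B}" and ?Y = "K' \<inter> {j. p j \<in> ?A'}"
  have fX: "finite ?X" "finite ?Y" using fin finEt finite_subset by blast+
  have sub: "K \<inter> {j. p j \<in> A} \<subseteq> ?X \<union> ?Y" using Ksub by blast
  have c0: "card (K \<inter> {j. p j \<in> A}) \<le> card (?X \<union> ?Y)"
    using fX sub by (intro card_mono) auto
  have c: "card (K \<inter> {j. p j \<in> A}) \<le> card ?X + card ?Y"
    using c0 card_Un_le[of ?X ?Y] by linarith
  have w1: "rk F + card ?X \<le> rk ?B" using aform_weak[OF a1, of ?B] A FF by blast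
  have w2: "rk F' + card ?Y \<le> rk ?A'" using aform_weak[OF a2, of ?A'] A FF by blast
  have s1: "?X \<noteq> {} \<Longrightarrow> rk F + card ?X < rk ?B"
  proof -
    assume "?X \<noteq> {}"
    moreover have "F \<subseteq> ?B" "?B \<subseteq> E" using A FF by blast+
    ultimately show ?thesis using a1[unfolded aform_def, rule_format, of ?B] by blast
  qed
  have s2: "?Y \<noteq> {} \<Longrightarrow> rk F' + card ?Y < rk ?A'"
  proof -
    assume "?Y \<noteq> {}"
    moreover have "F' \<subseteq> ?A'" "?A' \<subseteq> E" using A FF by blast+
    ultimately show ?thesis using a2[unfolded aform_def, rule_format, of ?A'] by blast
  qed
  have ne: "?X \<noteq> {} \<or> ?Y \<noteq> {}" using sub A by blast
  have sm: "rk ?A' + rk ?B \<le> rk A + rk F'" using rk_submod[of A F'] A FF by blast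
  from ne show "rk F + card (K \<inter> {j. p j \<in> A}) < rk A"
  proof
    assume "?X \<noteq> {}" then have "rk F + card ?X < rk ?B" by (rule s1)
    then show ?thesis using c w2 sm by linarith
  next
    assume "?Y \<noteq> {}" then have "rk F' + card ?Y < rk ?A'" by (rule s2)
    then show ?thesis using c w1 sm by linarith
  qed
qed

end

context setting begin

lemma list_aform: assumes "sorted_wrt (\<subset>) Gs" "Gs \<noteq> []" "\<forall>G\<in>set Gs. is_flat Et r G \<and> G \<noteq> Et"
  shows "aform (Fof (hd Gs)) (\<Union>(Jof ` set Gs))"
  using assms
proof (induction Gs)
  case Nil then show ?case by simp
next
  case (Cons G rest)
  have GEt: "G \<subseteq> Et" using Cons.prems(3) unfolding is_flat_def by simp
  have fG: "is_flat E rk (Fof G) \<and> Fof G \<noteq> E \<and> cond2 (Fof G) (Jof G)" using flat_G Cons.prems(3) by simp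
  have aG: "aform (Fof G) (Jof G)"
    by (rule cond2_aform) (use fG GEt Jof_sub Fof_sub in blast)+
  show ?case
  proof (cases "rest = []")
    case True then show ?thesis using aG by simp
  next
    case False
    have s: "sorted_wrt (\<subset>) rest" using Cons.prems(1) by simp
    have fl: "\<forall>G\<in>set rest. is_flat Et r G \<and> G \<noteq> Et" using Cons.prems(3) by simp
    have IH: "aform (Fof (hd rest)) (\<Union>(Jof ` set rest))" using Cons.IH[OF s False fl] .
    have hr: "hd rest \<in> set rest" using False by simp
    have Gsub: "G \<subseteq> hd rest" using Cons.prems(1) hr by auto
    have hrEt: "hd rest \<subseteq> Et" using fl hr unfolding is_flat_def by blast
    have "aform (Fof G) (Jof G \<union> \<Union>(Jof ` set rest))"
    proof (rule aform_chain[OF Fof_mono[OF Gsub] Fof_sub aG IH])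
      show "Jof G \<union> \<Union>(Jof ` set rest) \<subseteq> Jof G \<inter> {j. p j \<in> Fof (hd rest)} \<union> \<Union>(Jof ` set rest)"
      proof
        fix j assume j: "j \<in> Jof G \<union> \<Union>(Jof ` set rest)"
        show "j \<in> Jof G \<inter> {j. p j \<in> Fof (hd rest)} \<union> \<Union>(Jof ` set rest)"
        proof (cases "j \<in> Jof G \<and> p j \<notin> Fof (hd rest)")
          case True
          then have "j \<in> hd rest" "j \<in> Et" using Gsub Jof_sub GEt by blast+
          then have "j \<in> Jof (hd rest)" using True unfolding Jof_def by blast
          then show ?thesis using hr by blast
        next
          case False then show ?thesis using j by blast
        qed
      qed
      show "Jof G \<subseteq> Et" using Jof_sub GEt by blast
      show "\<Union>(Jof ` set rest) \<subseteq> Et" using fl Jof_sub unfolding is_flat_def by blast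
    qed
    then show ?thesis by simp
  qed
qed

lemma ng_G: assumes "G \<subseteq> Et"
  shows "ng (Et - G) = (\<lambda>i. ng (Et - pre (Fof G)) i + vec_ind (Jof G) i)"
proof
  fix i
  have d: "G = pre (Fof G) \<union> Jof G" "pre (Fof G) \<inter> Jof G = {}" using G_decomp Jof_disj by blast+
  show "ng (Et - G) i = ng (Et - pre (Fof G)) i + vec_ind (Jof G) i"
    unfolding ng_def vec_ind_def using d assms by auto
qed

lemma fibre_in_I:
  assumes s: "sorted_wrt (\<subset>) (Gs @ [Et])" and fl: "\<forall>G\<in>set Gs. is_flat Et r G \<and> G \<noteq> Et"
    and I: "I \<subseteq> hd (Gs @ [Et])"
    and e: "e \<in> E" and fib: "{j \<in> Et. p j = e} \<subseteq> I \<union> \<Union>(Jof ` set Gs)"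
  shows "{j \<in> Et. p j = e} \<subseteq> I"
proof -
  let ?fib = "{j \<in> Et. p j = e}"
  let ?X = "{G \<in> set Gs. ?fib \<inter> Jof G \<noteq> {}}"
  have "?X = {}"
  proof (rule ccontr)
    assume ne: "?X \<noteq> {}"
    have tot: "\<forall>A\<in>?X. \<forall>B\<in>?X. A \<subseteq> B \<or> B \<subseteq> A"
    proof (intro ballI)
      fix A B assume "A \<in> ?X" "B \<in> ?X"
      then have "A \<in> set (Gs @ [Et])" "B \<in> set (Gs @ [Et])" by auto
      then show "A \<subseteq> B \<or> B \<subseteq> A" using sorted_wrt_total[OF s] by blast
    qed
    obtain M where M: "M \<in> ?X" "\<forall>A\<in>?X. A \<subseteq> M" using chain_max[OF _ ne tot] by auto
    have hM: "hd (Gs @ [Et]) \<subseteq> M" using sorted_hd_le[OF s] M(1) by simp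
    have "?fib \<subseteq> M"
    proof
      fix j assume j: "j \<in> ?fib"
      then consider "j \<in> I" | G where "G \<in> set Gs" "j \<in> Jof G" using fib by blast
      then show "j \<in> M"
      proof cases
        case 1 then show ?thesis using I hM by blast
      next
        case 2
        then have "G \<in> ?X" using j by blast
        then show ?thesis using M(2) 2 Jof_sub by blast
      qed
    qed
    then have "e \<in> Fof M" unfolding Fof_def using e by blast
    then have "?fib \<inter> Jof M = {}" unfolding Jof_def by blast
    then show False using M(1) by blast
  qed
  then show ?thesis using fib by blast
qed

end

context setting begin

lemma P1: assumes C: "C \<in> aug_bergman_mat Et r"
  shows "\<exists>D \<in> aug_bergman_poly E Et p rk. C \<subseteq> D"
proof -
  obtain I Gs where C_def: "C = sigma_cone Et id I Gs" and comp: "compatible Et Et id I Gs"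
    and fl: "\<forall>G\<in>set Gs. is_flat Et r G \<and> G \<noteq> Et" and ind: "mat_indep Et r I"
    and Ifirst: "I \<subseteq> first_flat Et Gs"
    using C unfolding aug_bergman_mat_def by blast
  have IEt: "I \<subseteq> Et" and s: "sorted_wrt (\<subset>) (Gs @ [Et])"
    using comp unfolding compatible_def is_chain_def by blast+
  have Ihd: "I \<subseteq> hd (Gs @ [Et])" using Ifirst unfolding first_flat_def .
  have GEt: "\<forall>G\<in>set Gs. G \<subseteq> Et" using fl unfolding is_flat_def by blast
  have fGs: "\<forall>G\<in>set Gs. is_flat E rk (Fof G) \<and> Fof G \<noteq> E \<and> cond2 (Fof G) (Jof G)"
    using flat_G fl by blast
  define S where "S = I \<union> \<Union>(Jof ` set Gs)"
  have UEt0: "\<Union>(Jof ` set Gs) \<subseteq> Et"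
  proof
    fix j assume "j \<in> \<Union>(Jof ` set Gs)"
    then obtain G where "G \<in> set Gs" "j \<in> Jof G" by blast
    then show "j \<in> Et" using GEt Jof_sub[of G] by blast
  qed
  then have SEt: "S \<subseteq> Et" unfolding S_def using IEt by blast
  have fS: "finite S" using SEt finEt finite_subset by blast
  have totG: "\<forall>A\<in>set Gs. \<forall>B\<in>set Gs. A \<subseteq> B \<or> B \<subseteq> A"
  proof (intro ballI)
    fix A B assume "A \<in> set Gs" "B \<in> set Gs"
    then have "A \<in> set (Gs @ [Et])" "B \<in> set (Gs @ [Et])" by auto
    then show "A \<subseteq> B \<or> B \<subseteq> A" using sorted_wrt_total[OF s] by blast
  qed
  have totF: "\<forall>A\<in>Fof ` set Gs. \<forall>B\<in>Fof ` set Gs. A \<subseteq> B \<or> B \<subseteq> A"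
  proof (intro ballI)
    fix A B assume "A \<in> Fof ` set Gs" "B \<in> Fof ` set Gs"
    then obtain G G' where "G \<in> set Gs" "A = Fof G" "G' \<in> set Gs" "B = Fof G'" by blast
    then show "A \<subseteq> B \<or> B \<subseteq> A" using totG Fof_mono by metis
  qed
  have propF: "\<forall>A\<in>Fof ` set Gs. A \<subset> E"
  proof
    fix A assume "A \<in> Fof ` set Gs"
    then obtain G where "G \<in> set Gs" "A = Fof G" by blast
    then show "A \<subset> E" using fGs Fof_sub[of G] by auto
  qed
  obtain Fs where Fs: "set Fs = Fof ` set Gs" "sorted_wrt (\<subset>) (Fs @ [E])"
    using chain_list[OF _ totF propF] by auto
  define D where "D = sigma_cone Et p S Fs"
  have compD: "compatible E Et p S Fs"
    unfolding compatible_def is_chain_def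
  proof (intro conjI allI impI)
    show "S \<subseteq> Et" by (rule SEt)
    show "sorted_wrt (\<subset>) (Fs @ [E])" by (rule Fs(2))
    fix A assume A: "A \<subseteq> E \<and> {j \<in> Et. p j \<in> A} \<subseteq> S"
    show "A \<subseteq> first_flat E Fs"
    proof
      fix e assume e: "e \<in> A"
      have eE: "e \<in> E" using A e by blast
      have "{j \<in> Et. p j = e} \<subseteq> I"
        by (rule fibre_in_I[OF s fl Ihd eE]) (use A e in \<open>auto simp: S_def\<close>)
      moreover have "\<forall>G\<in>set Gs. hd (Gs @ [Et]) \<subseteq> G" using sorted_hd_le[OF s] by simp
      ultimately have "\<forall>G\<in>set Gs. {j \<in> Et. p j = e} \<subseteq> G"
        using Ihd by blast
      then have allF: "\<forall>F\<in>set Fs. e \<in> F" unfolding Fs(1) Fof_def using eE by blast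
      have "hd (Fs @ [E]) \<in> set (Fs @ [E])" by (cases Fs) auto
      then show "e \<in> first_flat E Fs" unfolding first_flat_def using allF eE by auto
    qed
  qed
  have flD: "\<forall>F\<in>set Fs. is_flat E rk F \<and> F \<noteq> E" unfolding Fs(1) using fGs by blast
  have indD: "\<forall>T. T \<subseteq> S \<longrightarrow> rk (p ` T) \<ge> card T"
  proof (intro allI impI)
    fix T assume T: "T \<subseteq> S"
    show "card T \<le> rk (p ` T)"
    proof (cases "Gs = []")
      case True
      then have "T \<subseteq> I" using T unfolding S_def by simp
      then show ?thesis using indep_D[OF ind] by blast
    next
      case False
      define F1 where "F1 = Fof (hd Gs)"
      define U where "U = \<Union>(Jof ` set Gs)"
      have hdG: "hd Gs \<in> set Gs" using False by simp
      have hd_eq: "hd (Gs @ [Et]) = hd Gs" using False by simp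
      have aU: "aform F1 U" unfolding F1_def U_def
        by (rule list_aform) (use s fl False in \<open>auto simp: sorted_wrt_append\<close>)
      have hdle: "\<forall>G\<in>set Gs. hd Gs \<subseteq> G" using sorted_hd_le[OF s] hd_eq by fastforce
      define T0 where "T0 = T \<inter> pre F1"
      define T' where "T' = T - pre F1"
      have T0I: "T0 \<subseteq> I"
      proof
        fix j assume j: "j \<in> T0"
        show "j \<in> I"
        proof (rule ccontr)
          assume "j \<notin> I"
          then obtain G where G: "G \<in> set Gs" "j \<in> Jof G" using j T unfolding T0_def S_def by blast
          have "F1 \<subseteq> Fof G" unfolding F1_def using hdle G(1) Fof_mono by blast
          then show False using G(2) j Jof_disj[of G] unfolding T0_def by blast
        qed
      qed
      have T'U: "T' \<subseteq> U"
      proof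
        fix j assume j: "j \<in> T'"
        show "j \<in> U"
        proof (cases "j \<in> I")
          case True
          then have "j \<in> hd Gs" "j \<in> Et" using Ihd hd_eq IEt by auto
          then have "j \<in> Jof (hd Gs)" using j unfolding T'_def F1_def Jof_def by blast
          then show ?thesis unfolding U_def using hdG by blast
        next
          case False then show ?thesis using j T unfolding T'_def S_def U_def by blast
        qed
      qed
      have TEt: "T \<subseteq> Et" using T SEt by blast
      have fT: "finite T" using TEt finEt finite_subset by blast
      have F1E: "F1 \<subseteq> E" unfolding F1_def by (rule Fof_sub)
      have pTE: "p ` T \<subseteq> E" using TEt pEt by blast
      let ?A = "F1 \<union> p ` T"
      have w: "rk F1 + card (U \<inter> {j. p j \<in> ?A}) \<le> rk ?A"
        by (rule aform_weak[OF aU]) (use F1E pTE in auto)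
      have "T' \<subseteq> U \<inter> {j. p j \<in> ?A}" using T'U unfolding T'_def by blast
      moreover have "finite (U \<inter> {j. p j \<in> ?A})"
        using finEt UEt0 unfolding U_def by (meson finite_Int finite_subset)
      ultimately have c1: "card T' \<le> card (U \<inter> {j. p j \<in> ?A})" by (rule card_mono[rotated])
      have sm: "rk (p ` T \<union> F1) + rk (p ` T \<inter> F1) \<le> rk (p ` T) + rk F1"
        using rk_submod pTE F1E by blast
      have "p ` T0 \<subseteq> p ` T \<inter> F1" unfolding T0_def by blast
      then have c2: "rk (p ` T0) \<le> rk (p ` T \<inter> F1)" using rk_mono pTE by blast
      have c3: "card T0 \<le> rk (p ` T0)" using indep_D[OF ind T0I] .
      have c4: "card T = card T0 + card T'" unfolding T0_def T'_def using fT
        by (metis card_Int_Diff)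
      have "rk ?A = rk (p ` T \<union> F1)" by (simp add: Un_commute)
      then show ?thesis using w c1 sm c2 c3 c4 by linarith
    qed
  qed
  have c2D: "\<forall>F\<in>set (Fs @ [E]). \<forall>T. T \<subseteq> S - {j. p j \<in> F} \<and> T \<noteq> {} \<longrightarrow> rk (F \<union> p ` T) > rk F + card T"
  proof (intro ballI allI impI)
    fix F T assume F: "F \<in> set (Fs @ [E])" and T: "T \<subseteq> S - {j. p j \<in> F} \<and> T \<noteq> {}"
    show "rk (F \<union> p ` T) > rk F + card T"
    proof (cases "F = E")
      case True
      then have "T = {}" using T SEt pEt by blast
      then show ?thesis using T by simp
    next
      case False
      then have "F \<in> set Fs" using F by simp
      then obtain G where G: "G \<in> set Gs" "F = Fof G" using Fs(1) by blast
      obtain xs ys where split: "Gs = xs @ G # ys" using split_list[OF G(1)] by blast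
      have s2: "sorted_wrt (\<subset>) (xs @ (G # ys) @ [Et])" using s split by simp
      have sG: "sorted_wrt (\<subset>) (G # ys)" using s2 unfolding sorted_wrt_append by simp
      have xsG: "\<forall>G'\<in>set xs. G' \<subset> G" using s2 unfolding sorted_wrt_append by simp
      have flG: "\<forall>G'\<in>set (G # ys). is_flat Et r G' \<and> G' \<noteq> Et" using fl split by simp
      define U where "U = \<Union>(Jof ` set (G # ys))"
      have aU: "aform F U" unfolding U_def G(2) using list_aform[OF sG _ flG] by simp
      have hdG: "hd (Gs @ [Et]) \<subseteq> G" using sorted_hd_le[OF s] G(1) by simp
      have GEt': "G \<subseteq> Et" using GEt G(1) by blast
      have sub: "S - {j. p j \<in> F} \<subseteq> U"
      proof
        fix j assume j: "j \<in> S - {j. p j \<in> F}"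
        then have jEt: "j \<in> Et" using SEt by blast
        have inJ: "j \<in> Jof G" if "j \<in> G" using that j jEt unfolding Jof_def G(2) by blast
        from j consider "j \<in> I" | G' where "G' \<in> set Gs" "j \<in> Jof G'" unfolding S_def by blast
        then show "j \<in> U"
        proof cases
          case 1 then show ?thesis using inJ Ihd hdG unfolding U_def by auto
        next
          case 2
          show ?thesis
          proof (cases "G' \<in> set xs")
            case True
            then have "j \<in> G" using xsG 2 Jof_sub by blast
            then show ?thesis using inJ unfolding U_def by auto
          next
            case False
            then have "G' \<in> set (G # ys)" using 2 split by auto
            then show ?thesis using 2 unfolding U_def by blast
          qed
        qed
      qed
      have UEt: "U \<subseteq> Et" unfolding U_def using flG Jof_sub unfolding is_flat_def by blast
      have FE: "F \<subseteq> E" using G(2) Fof_sub by blast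
      have "aform F (S - {j. p j \<in> F})" using aform_mono[OF aU sub UEt FE] .
      then have "cond2 F (S - {j. p j \<in> F})" using aform_cond2 SEt FE by blast
      then show ?thesis using T unfolding cond2_def by auto
    qed
  qed
  have Dpoly: "D \<in> aug_bergman_poly E Et p rk"
    unfolding aug_bergman_poly_def D_def
    by (rule CollectI, rule exI[of _ S], rule exI[of _ Fs]) (use compD flD indD c2D in simp)
  have "C \<subseteq> D"
  proof -
    let ?GC = "(\<lambda>F. ng (Et - {j \<in> Et. id j \<in> F})) ` set Gs \<union> (\<lambda>j. vec_ind {j}) ` I"
    let ?GD = "(\<lambda>F. ng (Et - {j \<in> Et. p j \<in> F})) ` set Fs \<union> (\<lambda>j. vec_ind {j}) ` S"
    have fGD: "finite ?GD" using fS by simp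
    have sub: "?GC \<subseteq> cone_gen ?GD"
    proof
      fix g assume "g \<in> ?GC"
      then consider G where "G \<in> set Gs" "g = ng (Et - {j \<in> Et. id j \<in> G})" | j where "j \<in> I" "g = vec_ind {j}"
        by (elim UnE imageE) auto
      then show "g \<in> cone_gen ?GD"
      proof cases
        case 1
        have GE: "G \<subseteq> Et" using GEt 1(1) by blast
        then have g: "g = (\<lambda>i. ng (Et - pre (Fof G)) i + vec_ind (Jof G) i)"
        proof -
          have "{j \<in> Et. id j \<in> G} = G" using GE by auto
          then show ?thesis using 1(2) ng_G[OF GE] by simp
        qed
        have a: "ng (Et - pre (Fof G)) \<in> cone_gen ?GD"
        proof (rule cone_mem[OF fGD])
          have "Fof G \<in> set Fs" using 1(1) Fs(1) by (rule_tac ssubst[OF Fs(1)]) (rule imageI)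
          then have "ng (Et - pre (Fof G)) \<in> (\<lambda>F. ng (Et - {j \<in> Et. p j \<in> F})) ` set Fs" by (rule imageI)
          then show "ng (Et - pre (Fof G)) \<in> ?GD" by (rule UnI1)
        qed
        have b: "vec_ind (Jof G) \<in> cone_gen ?GD"
        proof (rule vec_ind_cone)
          show "finite (Jof G)" by (rule finite_subset[OF subset_trans[OF Jof_sub GE] finEt])
          show "\<forall>j\<in>Jof G. vec_ind {j} \<in> cone_gen ?GD"
          proof
            fix j assume j: "j \<in> Jof G"
            have "j \<in> \<Union>(Jof ` set Gs)" using j 1(1) by blast
            then have "j \<in> S" unfolding S_def by (rule UnI2)
            then have "vec_ind {j} \<in> (\<lambda>j. vec_ind {j}) ` S" by (rule imageI)
            then have "vec_ind {j} \<in> ?GD" by (rule UnI2)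
            then show "vec_ind {j} \<in> cone_gen ?GD" by (rule cone_mem[OF fGD])
          qed
        qed
        show ?thesis unfolding g by (rule cone_add[OF a b])
      next
        case 2
        then have "g \<in> ?GD" unfolding S_def by blast
        then show ?thesis by (rule cone_mem[OF fGD])
      qed
    qed
    have "finite I" using finEt IEt finite_subset by blast
    then have fGC: "finite ?GC" by simp
    have "cone_gen ?GC \<subseteq> cone_gen ?GD" by (rule cone_subset[OF fGC sub])
    then show ?thesis unfolding C_def D_def sigma_cone_alt by simp
  qed
  then show ?thesis using Dpoly by blast
qed

end

definition Lev :: "'b set \<Rightarrow> ('b \<Rightarrow> real) \<Rightarrow> real \<Rightarrow> 'b set" where
  "Lev Et x t = {j \<in> Et. t \<le> x j}"
definition Vx :: "'b set \<Rightarrow> ('b \<Rightarrow> real) \<Rightarrow> real set" where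
  "Vx Et x = {t. t \<le> 0 \<and> (\<exists>j\<in>Et. x j < t) \<and> (t = 0 \<or> t \<in> x ` Et)}"
definition Pos :: "'b set \<Rightarrow> ('b \<Rightarrow> real) \<Rightarrow> 'b set" where
  "Pos Et x = {j \<in> Et. 0 < x j}"
definition LGen :: "'b set \<Rightarrow> ('b \<Rightarrow> real) \<Rightarrow> ('b \<Rightarrow> real) set" where
  "LGen Et x = (\<lambda>t. ng (Et - Lev Et x t)) ` Vx Et x \<union> (\<lambda>j. vec_ind {j}) ` Pos Et x"

lemma Vx_finite: "finite Et \<Longrightarrow> finite (Vx Et x)"
proof -
  assume "finite Et"
  moreover have "Vx Et x \<subseteq> insert 0 (x ` Et)" unfolding Vx_def by blast
  ultimately show ?thesis by (meson finite_imageI finite_insert finite_subset)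
qed

lemma LGen_finite: "finite Et \<Longrightarrow> finite (LGen Et x)"
  unfolding LGen_def Pos_def by (simp add: Vx_finite)

lemma LC_base: assumes fin: "finite Et" and van: "\<forall>j. j \<notin> Et \<longrightarrow> x j = 0"
  and nn: "\<forall>j\<in>Et. 0 \<le> x j"
  shows "x \<in> cone_gen (LGen Et x)"
proof -
  let ?P = "Pos Et x"
  have fP: "finite ?P" using fin unfolding Pos_def by simp
  have eq: "x = (\<lambda>i. \<Sum>j\<in>?P. x j * vec_ind {j} i)"
  proof
    fix i
    have "(\<Sum>j\<in>?P. x j * vec_ind {j} i) = (\<Sum>j\<in>?P. if j = i then x i else 0)"
      by (rule sum.cong) (auto simp: vec_ind_def)
    also have "\<dots> = (if i \<in> ?P then x i else 0)" using fP by simp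
    also have "\<dots> = x i"
    proof (cases "i \<in> Et")
      case True then show ?thesis using nn unfolding Pos_def by auto
    next
      case False then show ?thesis using van unfolding Pos_def by auto
    qed
    finally show "x i = (\<Sum>j\<in>?P. x j * vec_ind {j} i)" by simp
  qed
  have "\<forall>j\<in>?P. (\<lambda>i. x j * vec_ind {j} i) \<in> cone_gen (LGen Et x)"
  proof
    fix j assume j: "j \<in> ?P"
    have "vec_ind {j} \<in> LGen Et x" unfolding LGen_def using j by blast
    then have "vec_ind {j} \<in> cone_gen (LGen Et x)" by (rule cone_mem[OF LGen_finite[OF fin]])
    moreover have "0 \<le> x j" using j unfolding Pos_def by simp
    ultimately show "(\<lambda>i. x j * vec_ind {j} i) \<in> cone_gen (LGen Et x)" by (rule cone_scale)
  qed
  then have "(\<lambda>i. \<Sum>j\<in>?P. x j * vec_ind {j} i) \<in> cone_gen (LGen Et x)" by (rule cone_sum[OF fP])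
  then show ?thesis using eq by simp
qed

lemma LC: assumes fin: "finite Et" and van: "\<forall>j. j \<notin> Et \<longrightarrow> x j = 0"
  shows "x \<in> cone_gen (LGen Et x)"
  using van
proof (induction "card {t \<in> x ` Et. t < 0}" arbitrary: x rule: less_induct)
  case less
  show ?case
  proof (cases "{t \<in> x ` Et. t < 0} = {}")
    case True
    then have "\<forall>j\<in>Et. 0 \<le> x j" by (auto simp: not_less[symmetric])
    then show ?thesis using LC_base fin less.prems by blast
  next
    case False
    then have Ene: "Et \<noteq> {}" by blast
    define m where "m = Min (x ` Et)"
    have m_le: "\<forall>j\<in>Et. m \<le> x j" unfolding m_def using fin by simp
    have m_in: "m \<in> x ` Et" unfolding m_def using fin Ene by simp
    have m_neg: "m < 0"
    proof -
      obtain j where "j \<in> Et" "x j < 0" using False by blast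
      then show ?thesis using m_le by force
    qed
    define M where "M = {t \<in> insert 0 (x ` Et). m < t}"
    have fM: "finite M" unfolding M_def using fin by simp
    have M0: "0 \<in> M" unfolding M_def using m_neg by simp
    define m' where "m' = Min M"
    have m'M: "m' \<in> M" unfolding m'_def using fM M0 by (intro Min_in) auto
    have m'_le: "\<forall>t\<in>M. m' \<le> t" unfolding m'_def using fM by simp
    have mm': "m < m'" using m'M unfolding M_def by simp
    have m'0: "m' \<le> 0" using m'_le M0 by simp
    have above: "\<forall>j\<in>Et. x j \<noteq> m \<longrightarrow> m' \<le> x j"
    proof (intro ballI impI)
      fix j assume "j \<in> Et" "x j \<noteq> m"
      then have "x j \<in> M" unfolding M_def using m_le by force
      then show "m' \<le> x j" using m'_le by simp
    qed
    define y where "y = (\<lambda>j. if j \<in> Et \<and> x j = m then m' else x j)"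
    have vy: "\<forall>j. j \<notin> Et \<longrightarrow> y j = 0" using less.prems unfolding y_def by simp
    have y_ge: "\<forall>j\<in>Et. m' \<le> y j" using above unfolding y_def by auto
    have xy: "\<forall>j. x j \<le> y j" unfolding y_def using mm' by auto
    have NVsub: "{t \<in> y ` Et. t < 0} \<subseteq> {t \<in> x ` Et. t < 0} - {m}"
    proof
      fix t assume t: "t \<in> {t \<in> y ` Et. t < 0}"
      then obtain j where j: "j \<in> Et" "t = y j" "t < 0" by blast
      show "t \<in> {t \<in> x ` Et. t < 0} - {m}"
      proof (cases "x j = m")
        case True
        then have "t = m'" using j unfolding y_def by simp
        then have "m' \<in> x ` Et" "m' \<noteq> m" using m'M j(3) mm' unfolding M_def by auto
        then show ?thesis using \<open>t = m'\<close> j by simp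
      next
        case False
        then have "t = x j" using j unfolding y_def by simp
        then show ?thesis using j False by auto
      qed
    qed
    have m_NV: "m \<in> {t \<in> x ` Et. t < 0}" using m_in m_neg by simp
    have lt: "card {t \<in> y ` Et. t < 0} < card {t \<in> x ` Et. t < 0}"
    proof (rule psubset_card_mono)
      show "finite {t \<in> x ` Et. t < 0}" using fin by simp
      show "{t \<in> y ` Et. t < 0} \<subset> {t \<in> x ` Et. t < 0}" using NVsub m_NV by blast
    qed
    have IH: "y \<in> cone_gen (LGen Et y)" using less.hyps[OF lt vy] .
    have Pos_eq: "Pos Et y = Pos Et x" unfolding Pos_def y_def using m_neg m'0 by auto
    have Vsub: "\<forall>t\<in>Vx Et y. t \<in> Vx Et x \<and> Lev Et y t = Lev Et x t"
    proof
      fix t assume t: "t \<in> Vx Et y"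
      then obtain j0 where j0: "j0 \<in> Et" "y j0 < t" unfolding Vx_def by blast
      have tm': "m' < t" using y_ge j0 by force
      have "Lev Et y t = Lev Et x t" unfolding Lev_def y_def using tm' mm' by auto
      moreover have "t \<in> Vx Et x"
      proof -
        have "t \<le> 0" using t unfolding Vx_def by simp
        moreover have "\<exists>j\<in>Et. x j < t" using j0 xy by (meson le_less_trans)
        moreover have "t = 0 \<or> t \<in> x ` Et"
        proof -
          have "t = 0 \<or> t \<in> y ` Et" using t unfolding Vx_def by simp
          moreover have "t \<in> y ` Et \<Longrightarrow> t \<in> x ` Et"
          proof -
            assume "t \<in> y ` Et"
            then obtain j where "j \<in> Et" "t = y j" by blast
            then show ?thesis using tm' unfolding y_def by (cases "x j = m") auto
          qed
          ultimately show ?thesis by blast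
        qed
        ultimately show ?thesis unfolding Vx_def by blast
      qed
      ultimately show "t \<in> Vx Et x \<and> Lev Et y t = Lev Et x t" by simp
    qed
    have "LGen Et y \<subseteq> LGen Et x"
    proof
      fix g assume "g \<in> LGen Et y"
      then consider t where "t \<in> Vx Et y" "g = ng (Et - Lev Et y t)" | j where "j \<in> Pos Et y" "g = vec_ind {j}"
        unfolding LGen_def by blast
      then show "g \<in> LGen Et x"
      proof cases
        case 1 then show ?thesis using Vsub unfolding LGen_def by force
      next
        case 2 then show ?thesis using Pos_eq unfolding LGen_def by force
      qed
    qed
    then have "cone_gen (LGen Et y) \<subseteq> cone_gen (LGen Et x)" by (rule cone_mono[OF LGen_finite[OF fin]])
    then have y_in: "y \<in> cone_gen (LGen Et x)" using IH by blast
    have m'V: "m' \<in> Vx Et x"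
    proof -
      obtain j where "j \<in> Et" "x j = m" using m_in by blast
      moreover have "m' = 0 \<or> m' \<in> x ` Et" using m'M unfolding M_def by blast
      ultimately show ?thesis unfolding Vx_def using m'0 mm' by force
    qed
    have g_in: "ng (Et - Lev Et x m') \<in> cone_gen (LGen Et x)"
    proof (rule cone_mem[OF LGen_finite[OF fin]])
      show "ng (Et - Lev Et x m') \<in> LGen Et x" using m'V unfolding LGen_def by blast
    qed
    have "x = (\<lambda>i. y i + (m' - m) * ng (Et - Lev Et x m') i)"
    proof
      fix i
      show "x i = y i + (m' - m) * ng (Et - Lev Et x m') i"
      proof (cases "i \<in> Et")
        case False then show ?thesis using less.prems vy unfolding ng_def vec_ind_def by simp
      next
        case True
        show ?thesis
        proof (cases "x i = m")
          case True
          then show ?thesis using \<open>i \<in> Et\<close> mm' unfolding y_def ng_def vec_ind_def Lev_def by simp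
        next
          case False
          then have "m' \<le> x i" using above \<open>i \<in> Et\<close> by blast
          then show ?thesis using \<open>i \<in> Et\<close> False unfolding y_def ng_def vec_ind_def Lev_def by simp
        qed
      qed
    qed
    moreover have "(\<lambda>i. y i + (m' - m) * ng (Et - Lev Et x m') i) \<in> cone_gen (LGen Et x)"
      using cone_add[OF y_in cone_scale[OF g_in]] mm' by simp
    ultimately show ?thesis by simp
  qed
qed

context setting begin

lemma ng_pre_val: "ng (Et - pre F) i = (if i \<in> Et \<and> p i \<notin> F then -1 else 0)"
  unfolding ng_def vec_ind_def by auto

lemma decomp: assumes x: "x \<in> sigma_cone Et p S Fs" and SEt: "S \<subseteq> Et"
  shows "\<exists>N P. (\<forall>i. x i = N i + P i) \<and> (\<forall>i. N i \<le> 0) \<and> (\<forall>i. 0 \<le> P i) \<and> (\<forall>i. i \<notin> S \<longrightarrow> P i = 0)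
    \<and> (\<forall>i i'. i \<in> Et \<and> i' \<in> Et \<and> p i = p i' \<longrightarrow> N i = N i')
    \<and> (\<forall>i. (\<forall>F\<in>set Fs. p i \<in> F) \<longrightarrow> N i = 0)
    \<and> (\<forall>i i'. i \<in> Et \<and> i' \<in> Et \<and> (\<forall>F\<in>set Fs. p i' \<notin> F \<longrightarrow> p i \<notin> F) \<longrightarrow> N i \<le> N i')"
proof -
  let ?Gn = "(\<lambda>F. ng (Et - pre F)) ` set Fs"
  let ?Gp = "(\<lambda>j. vec_ind {j}) ` S"
  have "\<exists>c. (\<forall>g\<in>?Gn \<union> ?Gp. 0 \<le> c g) \<and> x = (\<lambda>i. \<Sum>g\<in>?Gn \<union> ?Gp. c g * g i)"
    using x unfolding sigma_cone_alt cone_gen_def by (rule CollectD)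
  then obtain c where c: "\<forall>g\<in>?Gn \<union> ?Gp. 0 \<le> c g" "x = (\<lambda>i. \<Sum>g\<in>?Gn \<union> ?Gp. c g * g i)"
    by (elim exE conjE)
  have fS: "finite S" using SEt finEt finite_subset by blast
  have fn: "finite ?Gn" by simp
  have fp: "finite (?Gp - ?Gn)" using fS by simp
  define N where "N = (\<lambda>i. \<Sum>g\<in>?Gn. c g * g i)"
  define P where "P = (\<lambda>i. \<Sum>g\<in>?Gp - ?Gn. c g * g i)"
  have un: "?Gn \<union> ?Gp = ?Gn \<union> (?Gp - ?Gn)" by blast
  have xNP: "\<forall>i. x i = N i + P i"
  proof
    fix i
    have "x i = (\<Sum>g\<in>?Gn \<union> ?Gp. c g * g i)" using c(2) by simp
    also have "\<dots> = (\<Sum>g\<in>?Gn \<union> (?Gp - ?Gn). c g * g i)" by (simp only: un)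
    also have "\<dots> = N i + P i" unfolding N_def P_def by (rule sum.union_disjoint[OF fn fp]) blast
    finally show "x i = N i + P i" .
  qed
  have gn: "\<And>g. g \<in> ?Gn \<Longrightarrow> \<exists>F\<in>set Fs. g = ng (Et - pre F)" by blast
  have cn: "\<And>g. g \<in> ?Gn \<Longrightarrow> 0 \<le> c g" using c(1) by blast
  have cp: "\<And>g. g \<in> ?Gp - ?Gn \<Longrightarrow> 0 \<le> c g" using c(1) by blast
  have Nle: "\<forall>i. N i \<le> 0"
  proof
    fix i
    have "\<forall>g\<in>?Gn. c g * g i \<le> 0"
    proof
      fix g assume g: "g \<in> ?Gn"
      obtain F where "g = ng (Et - pre F)" using gn[OF g] by blast
      then have "g i \<le> 0" using ng_pre_val[of F i] by simp
      then show "c g * g i \<le> 0" using cn[OF g] by (simp add: mult_nonneg_nonpos)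
    qed
    then show "N i \<le> 0" unfolding N_def by (intro sum_nonpos) blast
  qed
  have Pge: "\<forall>i. 0 \<le> P i"
  proof
    fix i
    have "\<forall>g\<in>?Gp - ?Gn. 0 \<le> c g * g i"
    proof
      fix g assume g: "g \<in> ?Gp - ?Gn"
      then obtain j where "g = vec_ind {j}" by blast
      then have "0 \<le> g i" unfolding vec_ind_def by simp
      then show "0 \<le> c g * g i" using cp[OF g] by simp
    qed
    then show "0 \<le> P i" unfolding P_def by (intro sum_nonneg) blast
  qed
  have P0: "\<forall>i. i \<notin> S \<longrightarrow> P i = 0"
  proof (intro allI impI)
    fix i assume i: "i \<notin> S"
    have "\<forall>g\<in>?Gp - ?Gn. c g * g i = 0"
    proof
      fix g assume g: "g \<in> ?Gp - ?Gn"
      then obtain j where "j \<in> S" "g = vec_ind {j}" by blast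
      then have "g i = 0" using i unfolding vec_ind_def by auto
      then show "c g * g i = 0" by simp
    qed
    then show "P i = 0" unfolding P_def by (intro sum.neutral) blast
  qed
  have Nfib: "\<forall>i i'. i \<in> Et \<and> i' \<in> Et \<and> p i = p i' \<longrightarrow> N i = N i'"
  proof (intro allI impI)
    fix i i' assume h: "i \<in> Et \<and> i' \<in> Et \<and> p i = p i'"
    have "\<forall>g\<in>?Gn. c g * g i = c g * g i'"
    proof
      fix g assume g: "g \<in> ?Gn"
      obtain F where "g = ng (Et - pre F)" using gn[OF g] by blast
      then show "c g * g i = c g * g i'" using h ng_pre_val[of F i] ng_pre_val[of F i'] by simp
    qed
    then show "N i = N i'" unfolding N_def by (intro sum.cong refl) blast
  qed
  have Nhd: "\<forall>i. (\<forall>F\<in>set Fs. p i \<in> F) \<longrightarrow> N i = 0"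
  proof (intro allI impI)
    fix i assume h: "\<forall>F\<in>set Fs. p i \<in> F"
    have "\<forall>g\<in>?Gn. c g * g i = 0"
    proof
      fix g assume g: "g \<in> ?Gn"
      obtain F where "F \<in> set Fs" "g = ng (Et - pre F)" using gn[OF g] by blast
      then show "c g * g i = 0" using h ng_pre_val[of F i] by simp
    qed
    then show "N i = 0" unfolding N_def by (intro sum.neutral) blast
  qed
  have Nmono: "\<forall>i i'. i \<in> Et \<and> i' \<in> Et \<and> (\<forall>F\<in>set Fs. p i' \<notin> F \<longrightarrow> p i \<notin> F) \<longrightarrow> N i \<le> N i'"
  proof (intro allI impI)
    fix i i' assume h: "i \<in> Et \<and> i' \<in> Et \<and> (\<forall>F\<in>set Fs. p i' \<notin> F \<longrightarrow> p i \<notin> F)"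
    have "\<forall>g\<in>?Gn. c g * g i \<le> c g * g i'"
    proof
      fix g assume g: "g \<in> ?Gn"
      obtain F where F: "F \<in> set Fs" "g = ng (Et - pre F)" using gn[OF g] by blast
      have "g i \<le> g i'" using h F ng_pre_val[of F i] ng_pre_val[of F i'] by auto
      then show "c g * g i \<le> c g * g i'" using cn[OF g] by (rule mult_left_mono)
    qed
    then show "N i \<le> N i'" unfolding N_def by (intro sum_mono) blast
  qed
  show ?thesis
    apply (rule exI[of _ N], rule exI[of _ P])
    using xNP Nle Pge P0 Nfib Nhd Nmono by (intro conjI)
qed

end

context setting begin

lemma level_flat:
  assumes comp: "compatible E Et p S Fs"
    and flD: "\<forall>F\<in>set Fs. is_flat E rk F \<and> F \<noteq> E"
    and c2: "\<forall>F\<in>set (Fs @ [E]). \<forall>T. T \<subseteq> S - {j. p j \<in> F} \<and> T \<noteq> {} \<longrightarrow> rk (F \<union> p ` T) > rk F + card T"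
    and xNP: "\<forall>i. x i = N i + P i" and Nle: "\<forall>i. N i \<le> 0" and Pge: "\<forall>i. 0 \<le> P i"
    and P0: "\<forall>i. i \<notin> S \<longrightarrow> P i = 0"
    and Nfib: "\<forall>i i'. i \<in> Et \<and> i' \<in> Et \<and> p i = p i' \<longrightarrow> N i = N i'"
    and Nhd: "\<forall>i. (\<forall>F\<in>set Fs. p i \<in> F) \<longrightarrow> N i = 0"
    and Nmono: "\<forall>i i'. i \<in> Et \<and> i' \<in> Et \<and> (\<forall>F\<in>set Fs. p i' \<notin> F \<longrightarrow> p i \<notin> F) \<longrightarrow> N i \<le> N i'"
    and t: "t \<le> 0" and L: "Lev Et x t \<noteq> Et"
  shows "is_flat Et r (Lev Et x t) \<and> ng (Et - Lev Et x t) \<in> sigma_cone Et p S Fs"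
proof -
  have s: "sorted_wrt (\<subset>) (Fs @ [E])" and SEt: "S \<subseteq> Et"
    using comp unfolding compatible_def is_chain_def by blast+
  define Ft where "Ft = {e \<in> E. \<forall>j\<in>Et. p j = e \<longrightarrow> t \<le> N j}"
  let ?L = "set (Fs @ [E])"
  have tot: "\<forall>A\<in>?L. \<forall>B\<in>?L. A \<subseteq> B \<or> B \<subseteq> A"
  proof (intro ballI)
    fix A B assume "A \<in> ?L" "B \<in> ?L"
    then show "A \<subseteq> B \<or> B \<subseteq> A" using sorted_wrt_total[OF s] by blast
  qed
  have LE: "\<forall>A\<in>?L. A \<subseteq> E"
  proof
    fix A assume "A \<in> ?L"
    then have "A = E \<or> A \<in> set Fs" by auto
    then show "A \<subseteq> E" using flD unfolding is_flat_def by blast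
  qed
  define h where "h = hd (Fs @ [E])"
  have hL: "h \<in> ?L" unfolding h_def by (cases Fs) auto
  have hle: "\<forall>A\<in>?L. h \<subseteq> A" unfolding h_def using sorted_hd_le[OF s] by blast
  have loop: "e \<in> h" if "e \<in> E" "\<forall>j\<in>Et. p j \<noteq> e" for e
  proof (cases "h = E")
    case True then show ?thesis using that by simp
  next
    case False
    then have "h \<in> set Fs" using hL by auto
    then have "is_flat E rk h" using flD by blast
    then show ?thesis using loop_in_flat empty_fibre_loop that by blast
  qed
  have hFt: "h \<subseteq> Ft"
  proof
    fix e assume e: "e \<in> h"
    have eE: "e \<in> E" using e LE hL by blast
    have "\<forall>j\<in>Et. p j = e \<longrightarrow> t \<le> N j"
    proof (intro ballI impI)
      fix j assume "j \<in> Et" "p j = e"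
      then have "\<forall>F\<in>set Fs. p j \<in> F" using e hle by auto
      then have "N j = 0" using Nhd by blast
      then show "t \<le> N j" using t by simp
    qed
    then show "e \<in> Ft" unfolding Ft_def using eE by blast
  qed
  let ?B = "{F' \<in> ?L. F' \<subseteq> Ft}"
  have Bne: "?B \<noteq> {}" using hL hFt by blast
  have Btot: "\<forall>A\<in>?B. \<forall>B\<in>?B. A \<subseteq> B \<or> B \<subseteq> A" using tot by blast
  have fB: "finite ?B" by simp
  obtain B where B: "B \<in> ?B" "\<forall>A\<in>?B. A \<subseteq> B" using chain_max[OF fB Bne Btot] by blast
  have FtB: "Ft \<subseteq> B"
  proof
    fix e assume e: "e \<in> Ft"
    have eE: "e \<in> E" using e unfolding Ft_def by blast
    show "e \<in> B"
    proof (rule ccontr)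
      assume eB: "e \<notin> B"
      have hB: "h \<subseteq> B" using B(2) hL hFt by blast
      show False
      proof (cases "\<forall>j\<in>Et. p j \<noteq> e")
        case True
        then have "e \<in> h" using loop eE by blast
        then show False using hB eB by blast
      next
        case False
        then obtain j0 where j0: "j0 \<in> Et" "p j0 = e" by blast
        have Nj0: "t \<le> N j0" using e j0 unfolding Ft_def by blast
        let ?C = "{F'' \<in> ?L. e \<in> F''}"
        have Cne: "?C \<noteq> {}" using eE by auto
        have Ctot: "\<forall>A\<in>?C. \<forall>B\<in>?C. A \<subseteq> B \<or> B \<subseteq> A" using tot by blast
        have fC: "finite ?C" by simp
        obtain F' where F': "F' \<in> ?C" "\<forall>A\<in>?C. F' \<subseteq> A" using chain_min[OF fC Cne Ctot] by blast
        have "F' \<subseteq> Ft"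
        proof
          fix e' assume e': "e' \<in> F'"
          have e'E: "e' \<in> E" using e' F'(1) LE by blast
          have "\<forall>j'\<in>Et. p j' = e' \<longrightarrow> t \<le> N j'"
          proof (intro ballI impI)
            fix j' assume j': "j' \<in> Et" "p j' = e'"
            have "\<forall>F\<in>set Fs. p j' \<notin> F \<longrightarrow> p j0 \<notin> F"
            proof (intro ballI impI)
              fix F assume F: "F \<in> set Fs" "p j' \<notin> F"
              have FL: "F \<in> ?L" using F(1) by simp
              have "F' \<subseteq> F \<or> F \<subseteq> F'" using tot FL F'(1) by blast
              moreover have "\<not> F' \<subseteq> F" using F(2) e' j'(2) by blast
              ultimately have FF': "F \<subseteq> F'" "F \<noteq> F'" using F(2) e' j'(2) by blast+
              show "p j0 \<notin> F"
              proof
                assume "p j0 \<in> F"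
                then have "F \<in> ?C" using FL j0(2) by blast
                then have "F' \<subseteq> F" using F'(2) by blast
                then show False using FF' by blast
              qed
            qed
            then have "N j0 \<le> N j'" using Nmono j0(1) j'(1) by blast
            then show "t \<le> N j'" using Nj0 by simp
          qed
          then show "e' \<in> Ft" unfolding Ft_def using e'E by blast
        qed
        then have "F' \<in> ?B" using F'(1) by blast
        then have "F' \<subseteq> B" using B(2) by blast
        then show False using F'(1) eB by blast
      qed
    qed
  qed
  have "B \<subseteq> Ft" using B(1) by blast
  then have "Ft = B" using FtB by (rule subset_antisym[rotated])
  then have FtL: "Ft \<in> ?L" using B(1) by blast
  have FtE: "Ft \<noteq> E"
  proof
    assume "Ft = E"
    then have "\<forall>j\<in>Et. t \<le> N j" unfolding Ft_def using pEt by blast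
    then have "\<forall>j\<in>Et. t \<le> x j" using xNP Pge by (metis add_increasing2)
    then have "Lev Et x t = Et" unfolding Lev_def by blast
    then show False using L by simp
  qed
  have FtFs: "Ft \<in> set Fs" using FtL FtE by simp
  have flFt: "is_flat E rk Ft" using flD FtFs by blast
  define K where "K = Lev Et x t - pre Ft"
  have preL: "pre Ft \<subseteq> Lev Et x t"
  proof
    fix j assume j: "j \<in> pre Ft"
    then have "t \<le> N j" unfolding Ft_def by blast
    then have "t \<le> x j" using xNP Pge by (metis add_increasing2)
    then show "j \<in> Lev Et x t" using j unfolding Lev_def by blast
  qed
  have KS: "K \<subseteq> S"
  proof
    fix j assume j: "j \<in> K"
    then have jEt: "j \<in> Et" and xj: "t \<le> x j" and nF: "p j \<notin> Ft" unfolding K_def Lev_def by blast+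
    have "p j \<in> E" using jEt pEt by blast
    then obtain j' where j': "j' \<in> Et" "p j' = p j" "N j' < t" using nF unfolding Ft_def by force
    have "N j < t" using Nfib j' jEt by metis
    show "j \<in> S"
    proof (rule ccontr)
      assume "j \<notin> S"
      then have "x j = N j" using xNP P0 by simp
      then show False using xj \<open>N j < t\<close> by simp
    qed
  qed
  have KEt: "K \<subseteq> Et" unfolding K_def Lev_def by blast
  have Kdisj: "K \<inter> pre Ft = {}" unfolding K_def by blast
  have cK: "cond2 Ft K" unfolding cond2_def
  proof (intro allI impI)
    fix T assume T: "T \<subseteq> K \<and> T \<noteq> {}"
    then have "T \<subseteq> S - {j. p j \<in> Ft} \<and> T \<noteq> {}" using KS Kdisj KEt by blast
    then have "rk (Ft \<union> p ` T) > rk Ft + card T" using c2 FtL by blast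
    then show "rk Ft + card T < rk (Ft \<union> p ` T)" by simp
  qed
  have Leq: "Lev Et x t = pre Ft \<union> K" using preL unfolding K_def by blast
  have flat: "is_flat Et r (Lev Et x t)" unfolding Leq by (rule flat_lift[OF flFt cK KEt Kdisj])
  let ?GD = "(\<lambda>F. ng (Et - {j \<in> Et. p j \<in> F})) ` set Fs \<union> (\<lambda>j. vec_ind {j}) ` S"
  have fS: "finite S" using SEt finEt finite_subset by blast
  have fGD: "finite ?GD" using fS by simp
  have a: "ng (Et - pre Ft) \<in> cone_gen ?GD"
  proof (rule cone_mem[OF fGD])
    have "ng (Et - pre Ft) \<in> (\<lambda>F. ng (Et - {j \<in> Et. p j \<in> F})) ` set Fs" using FtFs by (rule imageI)
    then show "ng (Et - pre Ft) \<in> ?GD" by (rule UnI1)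
  qed
  have b: "vec_ind K \<in> cone_gen ?GD"
  proof (rule vec_ind_cone)
    show "finite K" using KEt finEt finite_subset by blast
    show "\<forall>j\<in>K. vec_ind {j} \<in> cone_gen ?GD"
    proof
      fix j assume "j \<in> K"
      then have "j \<in> S" using KS by blast
      then have "vec_ind {j} \<in> (\<lambda>j. vec_ind {j}) ` S" by (rule imageI)
      then have "vec_ind {j} \<in> ?GD" by (rule UnI2)
      then show "vec_ind {j} \<in> cone_gen ?GD" by (rule cone_mem[OF fGD])
    qed
  qed
  have eq: "ng (Et - Lev Et x t) = (\<lambda>i. ng (Et - pre Ft) i + vec_ind K i)"
  proof
    fix i
    show "ng (Et - Lev Et x t) i = ng (Et - pre Ft) i + vec_ind K i"
      unfolding Leq ng_def vec_ind_def using Kdisj KEt by auto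
  qed
  have "ng (Et - Lev Et x t) \<in> cone_gen ?GD" unfolding eq by (rule cone_add[OF a b])
  then have "ng (Et - Lev Et x t) \<in> sigma_cone Et p S Fs" unfolding sigma_cone_alt .
  with flat show ?thesis by (rule conjI)
qed

end

context setting begin

lemma Lev_anti: "t \<le> t' \<Longrightarrow> Lev Et x t' \<subseteq> Lev Et x t"
  unfolding Lev_def by auto

lemma P2: assumes D: "D \<in> aug_bergman_poly E Et p rk" and x: "x \<in> D"
  shows "\<exists>C \<in> aug_bergman_mat Et r. x \<in> C \<and> C \<subseteq> D"
proof -
  obtain S Fs where D_def: "D = sigma_cone Et p S Fs" and comp: "compatible E Et p S Fs"
    and flD: "\<forall>F\<in>set Fs. is_flat E rk F \<and> F \<noteq> E"
    and indD: "\<forall>T. T \<subseteq> S \<longrightarrow> rk (p ` T) \<ge> card T"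
    and c2: "\<forall>F\<in>set (Fs @ [E]). \<forall>T. T \<subseteq> S - {j. p j \<in> F} \<and> T \<noteq> {} \<longrightarrow> rk (F \<union> p ` T) > rk F + card T"
    using D unfolding aug_bergman_poly_def by (elim CollectE exE conjE) (rule that; assumption)
  have SEt: "S \<subseteq> Et" using comp unfolding compatible_def by blast
  have xD: "x \<in> sigma_cone Et p S Fs" using x D_def by simp
  obtain N P where NP: "(\<forall>i. x i = N i + P i) \<and> (\<forall>i. N i \<le> 0) \<and> (\<forall>i. 0 \<le> P i) \<and> (\<forall>i. i \<notin> S \<longrightarrow> P i = 0)
    \<and> (\<forall>i i'. i \<in> Et \<and> i' \<in> Et \<and> p i = p i' \<longrightarrow> N i = N i')
    \<and> (\<forall>i. (\<forall>F\<in>set Fs. p i \<in> F) \<longrightarrow> N i = 0)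
    \<and> (\<forall>i i'. i \<in> Et \<and> i' \<in> Et \<and> (\<forall>F\<in>set Fs. p i' \<notin> F \<longrightarrow> p i \<notin> F) \<longrightarrow> N i \<le> N i')"
    using decomp[OF xD SEt] by (elim exE)
  have xNP: "\<forall>i. x i = N i + P i" using NP by (rule conjunct1)
  have Nle: "\<forall>i. N i \<le> 0" using NP by (elim conjE) assumption
  have Pge: "\<forall>i. 0 \<le> P i" using NP by (elim conjE) assumption
  have P0: "\<forall>i. i \<notin> S \<longrightarrow> P i = 0" using NP by (elim conjE) assumption
  have Nfib: "\<forall>i i'. i \<in> Et \<and> i' \<in> Et \<and> p i = p i' \<longrightarrow> N i = N i'" using NP by (elim conjE) assumption
  have Nhd: "\<forall>i. (\<forall>F\<in>set Fs. p i \<in> F) \<longrightarrow> N i = 0" using NP by (elim conjE) assumption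
  have Nmono: "\<forall>i i'. i \<in> Et \<and> i' \<in> Et \<and> (\<forall>F\<in>set Fs. p i' \<notin> F \<longrightarrow> p i \<notin> F) \<longrightarrow> N i \<le> N i'"
    using NP by (elim conjE) assumption
  have lev: "is_flat Et r (Lev Et x t) \<and> ng (Et - Lev Et x t) \<in> sigma_cone Et p S Fs"
    if "t \<le> 0" "Lev Et x t \<noteq> Et" for t
    by (rule level_flat[OF comp flD c2 xNP Nle Pge P0 Nfib Nhd Nmono that])
  have van: "\<forall>j. j \<notin> Et \<longrightarrow> x j = 0"
  proof (intro allI impI)
    fix j assume j: "j \<notin> Et"
    let ?G = "(\<lambda>F. ng (Et - {j \<in> Et. p j \<in> F})) ` set Fs \<union> (\<lambda>j. vec_ind {j}) ` S"
    have xG: "x \<in> cone_gen ?G" using xD unfolding sigma_cone_alt .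
    have "\<forall>g\<in>?G. g j = 0"
    proof
      fix g assume "g \<in> ?G"
      then consider F where "g = ng (Et - {j \<in> Et. p j \<in> F})" | j' where "j' \<in> S" "g = vec_ind {j'}"
        by (elim UnE imageE) auto
      then show "g j = 0"
      proof cases
        case 1 then show ?thesis using j by (simp add: ng_def vec_ind_def)
      next
        case 2
        then have "j' \<noteq> j" using j SEt by blast
        then show ?thesis using 2(2) by (simp add: vec_ind_def)
      qed
    qed
    then show "x j = 0" by (rule cone_vanish[OF xG])
  qed
  let ?V = "Vx Et x"
  have fV: "finite ?V" using Vx_finite finEt by blast
  have Vprop: "\<forall>t\<in>?V. t \<le> 0 \<and> Lev Et x t \<subset> Et"
  proof
    fix t assume t: "t \<in> ?V"
    then obtain j where "j \<in> Et" "x j < t" unfolding Vx_def by blast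
    then have "j \<notin> Lev Et x t" unfolding Lev_def by simp
    moreover have "Lev Et x t \<subseteq> Et" unfolding Lev_def by blast
    ultimately show "t \<le> 0 \<and> Lev Et x t \<subset> Et" using t \<open>j \<in> Et\<close> unfolding Vx_def by blast
  qed
  have totL: "\<forall>A\<in>Lev Et x ` ?V. \<forall>B\<in>Lev Et x ` ?V. A \<subseteq> B \<or> B \<subseteq> A"
  proof (intro ballI)
    fix A B assume "A \<in> Lev Et x ` ?V" "B \<in> Lev Et x ` ?V"
    then obtain t t' where tt: "A = Lev Et x t" "B = Lev Et x t'" by blast
    have "t \<le> t' \<or> t' \<le> t" by linarith
    then show "A \<subseteq> B \<or> B \<subseteq> A"
    proof
      assume "t \<le> t'" then have "B \<subseteq> A" unfolding tt by (rule Lev_anti)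
      then show ?thesis by blast
    next
      assume "t' \<le> t" then have "A \<subseteq> B" unfolding tt by (rule Lev_anti)
      then show ?thesis by blast
    qed
  qed
  have propL: "\<forall>A\<in>Lev Et x ` ?V. A \<subset> Et" using Vprop by blast
  obtain Ls where Ls: "set Ls = Lev Et x ` ?V" "sorted_wrt (\<subset>) (Ls @ [Et])"
    using chain_list[OF finite_imageI[OF fV] totL propL] by auto
  let ?Pos = "Pos Et x"
  have PosS: "?Pos \<subseteq> S"
  proof
    fix j assume j: "j \<in> ?Pos"
    show "j \<in> S"
    proof (rule ccontr)
      assume "j \<notin> S"
      then have "x j = N j" using xNP P0 by simp
      moreover have "0 < x j" using j unfolding Pos_def by simp
      ultimately show False using Nle[rule_format, of j] by linarith
    qed
  qed
  have PosEt: "?Pos \<subseteq> Et" unfolding Pos_def by blast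
  have Pos_first: "?Pos \<subseteq> hd (Ls @ [Et])"
  proof -
    have "hd (Ls @ [Et]) \<in> set (Ls @ [Et])" by (cases Ls) auto
    then have "hd (Ls @ [Et]) = Et \<or> (\<exists>t\<in>?V. hd (Ls @ [Et]) = Lev Et x t)" using Ls(1) by auto
    then show ?thesis
    proof
      assume "hd (Ls @ [Et]) = Et" then show ?thesis using PosEt by simp
    next
      assume "\<exists>t\<in>?V. hd (Ls @ [Et]) = Lev Et x t"
      then obtain t where t: "t \<in> ?V" "hd (Ls @ [Et]) = Lev Et x t" by blast
      have "t \<le> 0" using Vprop t(1) by blast
      then show ?thesis unfolding t(2) Pos_def Lev_def by auto
    qed
  qed
  define C where "C = sigma_cone Et id ?Pos Ls"
  have flL: "\<forall>F\<in>set Ls. is_flat Et r F \<and> F \<noteq> Et"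
  proof
    fix F assume "F \<in> set Ls"
    then obtain t where t: "t \<in> ?V" "F = Lev Et x t" using Ls(1) by blast
    then have "t \<le> 0" "Lev Et x t \<noteq> Et" using Vprop by blast+
    then show "is_flat Et r F \<and> F \<noteq> Et" using lev t(2) by blast
  qed
  have compC: "compatible Et Et id ?Pos Ls"
    unfolding compatible_def is_chain_def first_flat_def
  proof (intro conjI allI impI)
    show "?Pos \<subseteq> Et" by (rule PosEt)
    show "sorted_wrt (\<subset>) (Ls @ [Et])" by (rule Ls(2))
    fix A assume "A \<subseteq> Et \<and> {j \<in> Et. id j \<in> A} \<subseteq> ?Pos"
    then have "A \<subseteq> ?Pos" by auto
    then show "A \<subseteq> hd (Ls @ [Et])" using Pos_first by blast
  qed
  have indC: "mat_indep Et r ?Pos"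
  proof (rule indep_I[OF PosEt])
    show "\<forall>T. T \<subseteq> ?Pos \<longrightarrow> card T \<le> rk (p ` T)" using indD PosS by blast
  qed
  have Cmat: "C \<in> aug_bergman_mat Et r"
    unfolding aug_bergman_mat_def C_def
    apply (rule CollectI, rule exI[of _ ?Pos], rule exI[of _ Ls])
    apply (intro conjI refl compC flL indC)
    unfolding first_flat_def by (rule Pos_first)
  have gens: "(\<lambda>F. ng (Et - {j \<in> Et. id j \<in> F})) ` set Ls \<union> (\<lambda>j. vec_ind {j}) ` ?Pos = LGen Et x"
  proof -
    have "(\<lambda>F. ng (Et - {j \<in> Et. id j \<in> F})) ` set Ls = (\<lambda>t. ng (Et - {j \<in> Et. id j \<in> Lev Et x t})) ` ?V"
      unfolding Ls(1) image_image ..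
    also have "\<dots> = (\<lambda>t. ng (Et - Lev Et x t)) ` ?V"
      by (rule image_cong[OF refl]) (auto simp: Lev_def)
    finally show ?thesis unfolding LGen_def by simp
  qed
  have xC: "x \<in> C" unfolding C_def sigma_cone_alt gens using LC[OF finEt van] .
  have CD: "C \<subseteq> D"
  proof -
    let ?GD = "(\<lambda>F. ng (Et - {j \<in> Et. p j \<in> F})) ` set Fs \<union> (\<lambda>j. vec_ind {j}) ` S"
    have fS: "finite S" using SEt finEt finite_subset by blast
    have fGD: "finite ?GD" using fS by simp
    have "LGen Et x \<subseteq> cone_gen ?GD"
    proof
      fix g assume "g \<in> LGen Et x"
      then consider t where "t \<in> ?V" "g = ng (Et - Lev Et x t)" | j where "j \<in> ?Pos" "g = vec_ind {j}"
        unfolding LGen_def by (elim UnE imageE) auto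
      then show "g \<in> cone_gen ?GD"
      proof cases
        case 1
        then have "t \<le> 0" "Lev Et x t \<noteq> Et" using Vprop by blast+
        then have "ng (Et - Lev Et x t) \<in> sigma_cone Et p S Fs" using lev by blast
        then show ?thesis using 1(2) unfolding sigma_cone_alt by simp
      next
        case 2
        then have "g \<in> ?GD" using PosS by blast
        then show ?thesis by (rule cone_mem[OF fGD])
      qed
    qed
    then have "cone_gen (LGen Et x) \<subseteq> cone_gen ?GD" by (rule cone_subset[OF LGen_finite[OF finEt]])
    then show ?thesis unfolding C_def D_def sigma_cone_alt gens .
  qed
  show ?thesis using Cmat xC CD by blast
qed

lemma main:
  shows "support (aug_bergman_poly E Et p rk) = support (aug_bergman_mat Et (lift_rank E p rk))
    \<and> aug_bergman_poly E Et p rk \<subseteq> fan_pi E Et p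
    \<and> (\<forall>C \<in> aug_bergman_mat Et (lift_rank E p rk). \<exists>D \<in> aug_bergman_poly E Et p rk. C \<subseteq> D)
    \<and> (\<forall>D \<in> aug_bergman_poly E Et p rk. \<exists>Cs \<subseteq> aug_bergman_mat Et (lift_rank E p rk). D = \<Union> Cs)"
proof (intro conjI)
  show iii: "\<forall>C \<in> aug_bergman_mat Et r. \<exists>D \<in> aug_bergman_poly E Et p rk. C \<subseteq> D"
    using P1 by blast
  show iv: "\<forall>D \<in> aug_bergman_poly E Et p rk. \<exists>Cs \<subseteq> aug_bergman_mat Et r. D = \<Union> Cs"
  proof
    fix D assume D: "D \<in> aug_bergman_poly E Et p rk"
    let ?Cs = "{C \<in> aug_bergman_mat Et r. C \<subseteq> D}"
    have "D = \<Union> ?Cs"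
    proof
      show "D \<subseteq> \<Union> ?Cs"
      proof
        fix x assume "x \<in> D"
        then obtain C where "C \<in> aug_bergman_mat Et r" "x \<in> C" "C \<subseteq> D" using P2[OF D] by blast
        then show "x \<in> \<Union> ?Cs" by blast
      qed
      show "\<Union> ?Cs \<subseteq> D" by blast
    qed
    moreover have "?Cs \<subseteq> aug_bergman_mat Et r" by blast
    ultimately show "\<exists>Cs \<subseteq> aug_bergman_mat Et r. D = \<Union> Cs" by (intro exI[of _ ?Cs] conjI)
  qed
  show "aug_bergman_poly E Et p rk \<subseteq> fan_pi E Et p"
  proof
    fix D assume "D \<in> aug_bergman_poly E Et p rk"
    then obtain S Fs where SF: "D = sigma_cone Et p S Fs" "compatible E Et p S Fs"
      unfolding aug_bergman_poly_def by (elim CollectE exE conjE) (rule that; assumption)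
    show "D \<in> fan_pi E Et p" unfolding fan_pi_def
      by (rule CollectI, rule exI[of _ S], rule exI[of _ Fs]) (intro conjI SF)
  qed
  show "support (aug_bergman_poly E Et p rk) = support (aug_bergman_mat Et r)"
    unfolding support_def
  proof
    show "\<Union> (aug_bergman_poly E Et p rk) \<subseteq> \<Union> (aug_bergman_mat Et r)"
    proof
      fix x assume "x \<in> \<Union> (aug_bergman_poly E Et p rk)"
      then obtain D where D: "D \<in> aug_bergman_poly E Et p rk" "x \<in> D" by blast
      then obtain C where "C \<in> aug_bergman_mat Et r" "x \<in> C" using P2 by blast
      then show "x \<in> \<Union> (aug_bergman_mat Et r)" by blast
    qed
    show "\<Union> (aug_bergman_mat Et r) \<subseteq> \<Union> (aug_bergman_poly E Et p rk)"
    proof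
      fix x assume "x \<in> \<Union> (aug_bergman_mat Et r)"
      then obtain C where C: "C \<in> aug_bergman_mat Et r" "x \<in> C" by blast
      then obtain D where "D \<in> aug_bergman_poly E Et p rk" "C \<subseteq> D" using P1 by blast
      then show "x \<in> \<Union> (aug_bergman_poly E Et p rk)" using C(2) by blast
    qed
  qed
qed

end

theorem theorem3p8:
  fixes E :: "'a set" and Et :: "'b set" and p :: "'b \<Rightarrow> 'a" and rk :: "'a set \<Rightarrow> nat"
  assumes "finite E" and "finite Et" and "p ` Et \<subseteq> E"
    and "polymatroid E Et p rk"
  shows "support (aug_bergman_poly E Et p rk) = support (aug_bergman_mat Et (lift_rank E p rk))
    \<and> aug_bergman_poly E Et p rk \<subseteq> fan_pi E Et p
    \<and> (\<forall>C \<in> aug_bergman_mat Et (lift_rank E p rk). \<exists>D \<in> aug_bergman_poly E Et p rk. C \<subseteq> D)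
    \<and> (\<forall>D \<in> aug_bergman_poly E Et p rk. \<exists>Cs \<subseteq> aug_bergman_mat Et (lift_rank E p rk). D = \<Union> Cs)"
proof -
  interpret setting E Et p rk using assms by unfold_locales
  show ?thesis by (rule main)
qed

end
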